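(* Let $\mathcal G=((V,E),(V_1,V_2,V_\Diamond),\delta,w)$ be a stochastic game, $\varphi$ a bounded prefix-independent objective, and consider the classes of the expected value vector $\mathsf r^*=(\mathbb{E}_v(\varphi))_{v\in V}$. Let $N$ be the maximum denominator (in lowest terms) of the probabilities $\delta(v)(v')$ occurring in $\mathcal G$, and let $B_0$ be a positive integer such that the value of every $\mathsf r^*$-class without boundary vertices can be written as $p/q$ with integers $p,q$, $0<q\le B_0$. Then the value of every $\mathsf r^*$-class can be written as $p/q$ with integers $p,q$ and $0<q\le 2^{|V|}\cdot N^{|V|^3}\cdot B_0^{|V|}$.
   Context: A stochastic game is $\mathcal{G}=((V,E),(V_1,V_2,V_\Diamond),\delta,w)$ where $(V,E)$ is a finite directed graph in which every vertex $v$ has a nonempty set $E(v)=\{v' : (v,v')\in E\}$ of out-neighbours; $(V_1,V_2,V_\Diamond)$ partitions $V$ into vertices of Player 1, of Player 2, and probabilistic vertices; $\delta$ assigns to each $v\in V_\Diamond$ a probability distribution on $E(v)$ with rational values, positive on every out-neighbour; $w:E\to\mathbb{Q}$ is a payoff function. Plays are infinite paths; deterministic strategies of Player $i$ map finite prefixes ending in $V_i$ to an out-neighbour of the last vertex; a strategy pair and initial vertex induce a probability measure on plays. An objective $\varphi$ is a Borel-measurable real function on plays; bounded if $|\varphi|\le W_\varphi$ for some integer $W_\varphi$; prefix-independent if plays with a common suffix get equal value. Player 1 maximises, Player 2 minimises the expectation; $\mathbb{E}_v(\varphi)=\sup_{\sigma_1}\inf_{\sigma_2}\mathbb{E}^{\sigma_1,\sigma_2}_v[\varphi]=\inf_{\sigma_2}\sup_{\sigma_1}\mathbb{E}^{\sigma_1,\sigma_2}_v[\varphi]$.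 For a real vector $\mathsf r$ indexed by $V$, its classes are the maximal nonempty sets of vertices on which $\mathsf r$ is constant (the value of the class is this constant); a vertex $v$ of a class $C$ is a boundary vertex if $v\in V_\Diamond$ and $E(v)\not\subseteq C$. *)

theory Defs
  imports "HOL-Probability.Probability"
begin

text \<open>Stochastic games. Vertices are the elements of a finite type 'v (so V = UNIV, |V| = CARD('v)).
  Finite prefixes of plays are nonempty lists (oldest vertex first); plays are streams.\<close>

definition succs :: "('v \<times> 'v) set \<Rightarrow> 'v \<Rightarrow> 'v set" where
  "succs E v = {u. (v, u) \<in> E}"

definition stochastic_game ::
  "('v::finite \<times> 'v) set \<Rightarrow> 'v set \<Rightarrow> 'v set \<Rightarrow> 'v set \<Rightarrow> ('v \<Rightarrow> 'v \<Rightarrow> rat) \<Rightarrow> bool" where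
  "stochastic_game E V1 V2 Vp \<delta> \<longleftrightarrow>
     (\<forall>v. succs E v \<noteq> {}) \<and>
     V1 \<union> V2 \<union> Vp = UNIV \<and> V1 \<inter> V2 = {} \<and> V1 \<inter> Vp = {} \<and> V2 \<inter> Vp = {} \<and>
     (\<forall>v\<in>Vp. (\<forall>u\<in>succs E v. \<delta> v u > 0) \<and> (\<Sum>u\<in>succs E v. \<delta> v u) = 1)"

definition strategies :: "('v \<times> 'v) set \<Rightarrow> 'v set \<Rightarrow> ('v list \<Rightarrow> 'v) set" where
  "strategies E Vi = {\<sigma>. \<forall>h. h \<noteq> [] \<and> last h \<in> Vi \<longrightarrow> \<sigma> h \<in> succs E (last h)}"

definition is_play :: "('v \<times> 'v) set \<Rightarrow> 'v stream \<Rightarrow> bool" where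
  "is_play E \<omega> \<longleftrightarrow> (\<forall>i. (\<omega> !! i, \<omega> !! Suc i) \<in> E)"

definition step_prob ::
  "('v \<times> 'v) set \<Rightarrow> 'v set \<Rightarrow> 'v set \<Rightarrow> ('v \<Rightarrow> 'v \<Rightarrow> rat) \<Rightarrow>
   ('v list \<Rightarrow> 'v) \<Rightarrow> ('v list \<Rightarrow> 'v) \<Rightarrow> 'v list \<Rightarrow> 'v \<Rightarrow> real" where
  "step_prob E V1 V2 \<delta> \<sigma>1 \<sigma>2 h u =
     (if last h \<in> V1 then (if \<sigma>1 h = u then 1 else 0)
      else if last h \<in> V2 then (if \<sigma>2 h = u then 1 else 0)
      else if u \<in> succs E (last h) then real_of_rat (\<delta> (last h) u) else 0)"

definition prefix_prob ::
  "('v \<times> 'v) set \<Rightarrow> 'v set \<Rightarrow> 'v set \<Rightarrow> ('v \<Rightarrow> 'v \<Rightarrow> rat) \<Rightarrow>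
   ('v list \<Rightarrow> 'v) \<Rightarrow> ('v list \<Rightarrow> 'v) \<Rightarrow> 'v \<Rightarrow> 'v list \<Rightarrow> real" where
  "prefix_prob E V1 V2 \<delta> \<sigma>1 \<sigma>2 v h =
     (if hd h = v then (\<Prod>i<length h - 1. step_prob E V1 V2 \<delta> \<sigma>1 \<sigma>2 (take (Suc i) h) (h ! Suc i))
      else 0)"

definition play_measure ::
  "('v::countable \<times> 'v) set \<Rightarrow> 'v set \<Rightarrow> 'v set \<Rightarrow> ('v \<Rightarrow> 'v \<Rightarrow> rat) \<Rightarrow>
   ('v list \<Rightarrow> 'v) \<Rightarrow> ('v list \<Rightarrow> 'v) \<Rightarrow> 'v \<Rightarrow> 'v stream measure" where
  "play_measure E V1 V2 \<delta> \<sigma>1 \<sigma>2 v =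
     (SOME M. sets M = sets (stream_space (count_space UNIV)) \<and> prob_space M \<and>
        (\<forall>h. h \<noteq> [] \<longrightarrow>
           measure M {\<omega> \<in> space M. stake (length h) \<omega> = h} = prefix_prob E V1 V2 \<delta> \<sigma>1 \<sigma>2 v h))"

definition expected ::
  "('v::countable \<times> 'v) set \<Rightarrow> 'v set \<Rightarrow> 'v set \<Rightarrow> ('v \<Rightarrow> 'v \<Rightarrow> rat) \<Rightarrow>
   ('v list \<Rightarrow> 'v) \<Rightarrow> ('v list \<Rightarrow> 'v) \<Rightarrow> 'v \<Rightarrow> ('v stream \<Rightarrow> real) \<Rightarrow> real" where
  "expected E V1 V2 \<delta> \<sigma>1 \<sigma>2 v \<phi> = integral\<^sup>L (play_measure E V1 V2 \<delta> \<sigma>1 \<sigma>2 v) \<phi>"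

definition game_value ::
  "('v::countable \<times> 'v) set \<Rightarrow> 'v set \<Rightarrow> 'v set \<Rightarrow> ('v \<Rightarrow> 'v \<Rightarrow> rat) \<Rightarrow>
   ('v stream \<Rightarrow> real) \<Rightarrow> 'v \<Rightarrow> real" where
  "game_value E V1 V2 \<delta> \<phi> v =
     (SUP \<sigma>1\<in>strategies E V1. INF \<sigma>2\<in>strategies E V2. expected E V1 V2 \<delta> \<sigma>1 \<sigma>2 v \<phi>)"

definition bounded_objective :: "('v \<times> 'v) set \<Rightarrow> ('v stream \<Rightarrow> real) \<Rightarrow> bool" where
  "bounded_objective E \<phi> \<longleftrightarrow> (\<exists>W::int. \<forall>\<omega>. is_play E \<omega> \<longrightarrow> \<bar>\<phi> \<omega>\<bar> \<le> W)"

definition prefix_independent :: "('v \<times> 'v) set \<Rightarrow> ('v stream \<Rightarrow> real) \<Rightarrow> bool" where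
  "prefix_independent E \<phi> \<longleftrightarrow>
     (\<forall>\<omega> \<omega>' i j. is_play E \<omega> \<and> is_play E \<omega>' \<and> sdrop i \<omega> = sdrop j \<omega>' \<longrightarrow> \<phi> \<omega> = \<phi> \<omega>')"

definition classes :: "('v \<Rightarrow> real) \<Rightarrow> 'v set set" where
  "classes r = {C. C \<noteq> {} \<and> (\<exists>c. C = {u. r u = c})}"

definition class_value :: "('v \<Rightarrow> real) \<Rightarrow> 'v set \<Rightarrow> real" where
  "class_value r C = r (SOME u. u \<in> C)"

definition boundary_vertex :: "('v \<times> 'v) set \<Rightarrow> 'v set \<Rightarrow> 'v set \<Rightarrow> 'v \<Rightarrow> bool" where
  "boundary_vertex E Vp C v \<longleftrightarrow> v \<in> C \<and> v \<in> Vp \<and> \<not> succs E v \<subseteq> C"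

text \<open>Maximum denominator (in lowest terms) of the probabilities occurring in the game
  (1 if there are none).\<close>
definition max_denom :: "('v::finite \<times> 'v) set \<Rightarrow> 'v set \<Rightarrow> ('v \<Rightarrow> 'v \<Rightarrow> rat) \<Rightarrow> int" where
  "max_denom E Vp \<delta> = Max (insert 1 {snd (quotient_of (\<delta> v u)) | v u. v \<in> Vp \<and> u \<in> succs E v})"

end

theory Submission
  imports Defs
begin


lemma inf_split:
  fixes h :: "'a \<Rightarrow> 'u \<Rightarrow> real" and f :: "'u \<Rightarrow> 'a \<Rightarrow> real"
  assumes S: "finite S" and d: "\<And>u. u \<in> S \<Longrightarrow> d u \<ge> 0" and T: "T \<noteq> {}"
    and fb: "\<And>u \<tau>. u \<in> S \<Longrightarrow> \<tau> \<in> T \<Longrightarrow> \<bar>f u \<tau>\<bar> \<le> B"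
    and comp: "\<And>\<sigma> u. \<sigma> \<in> T \<Longrightarrow> u \<in> S \<Longrightarrow> \<exists>\<tau>\<in>T. h \<sigma> u = f u \<tau>"
    and glue: "\<And>\<tau>s. (\<And>u. u \<in> S \<Longrightarrow> \<tau>s u \<in> T) \<Longrightarrow> \<exists>\<sigma>\<in>T. \<forall>u\<in>S. h \<sigma> u = f u (\<tau>s u)"
  shows "(INF \<sigma>\<in>T. \<Sum>u\<in>S. d u * h \<sigma> u) = (\<Sum>u\<in>S. d u * (INF \<tau>\<in>T. f u \<tau>))"
proof -
  have bddf: "bdd_below (f u ` T)" if "u \<in> S" for u
    using fb[OF that] by (intro bdd_belowI[of _ "-B"]) force
  have lowf: "(INF \<tau>\<in>T. f u \<tau>) \<le> f u \<tau>" if "u \<in> S" "\<tau> \<in> T" for u \<tau>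
    by (rule cINF_lower[OF bddf[OF that(1)] that(2)])
  have hge: "(\<Sum>u\<in>S. d u * (INF \<tau>\<in>T. f u \<tau>)) \<le> (\<Sum>u\<in>S. d u * h \<sigma> u)" if sT: "\<sigma> \<in> T" for \<sigma>
  proof (rule sum_mono)
    fix u assume u: "u \<in> S"
    obtain \<tau> where "\<tau> \<in> T" "h \<sigma> u = f u \<tau>" using comp[OF sT u] by blast
    then show "d u * (INF \<tau>\<in>T. f u \<tau>) \<le> d u * h \<sigma> u"
      using lowf[OF u] d[OF u] by (auto intro: mult_left_mono)
  qed
  have bddh: "bdd_below ((\<lambda>\<sigma>. \<Sum>u\<in>S. d u * h \<sigma> u) ` T)"
    using hge by (intro bdd_belowI) auto
  show ?thesis
  proof (rule antisym)
    show "(INF \<sigma>\<in>T. \<Sum>u\<in>S. d u * h \<sigma> u) \<le> (\<Sum>u\<in>S. d u * (INF \<tau>\<in>T. f u \<tau>))"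
    proof (rule field_le_epsilon)
      fix e :: real assume e: "0 < e"
      define D where "D = (\<Sum>u\<in>S. d u)"
      have D: "D \<ge> 0" unfolding D_def using d by (simp add: sum_nonneg)
      define e' where "e' = e / (D + 1)"
      have e': "e' > 0" unfolding e'_def using e D by simp
      have "\<forall>u\<in>S. \<exists>\<tau>\<in>T. f u \<tau> < (INF \<tau>\<in>T. f u \<tau>) + e'"
      proof
        fix u assume u: "u \<in> S"
        have "(INF \<tau>\<in>T. f u \<tau>) < (INF \<tau>\<in>T. f u \<tau>) + e'" using e' by simp
        then show "\<exists>\<tau>\<in>T. f u \<tau> < (INF \<tau>\<in>T. f u \<tau>) + e'"
          using cINF_less_iff[OF T bddf[OF u]] by blast
      qed
      then obtain \<tau>s where \<tau>s: "\<And>u. u \<in> S \<Longrightarrow> \<tau>s u \<in> T \<and> f u (\<tau>s u) < (INF \<tau>\<in>T. f u \<tau>) + e'"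
        by metis
      obtain \<sigma> where \<sigma>: "\<sigma> \<in> T" "\<forall>u\<in>S. h \<sigma> u = f u (\<tau>s u)" using glue[of \<tau>s] \<tau>s by blast
      have "(INF \<sigma>\<in>T. \<Sum>u\<in>S. d u * h \<sigma> u) \<le> (\<Sum>u\<in>S. d u * h \<sigma> u)"
        by (rule cINF_lower[OF bddh \<sigma>(1)])
      also have "\<dots> \<le> (\<Sum>u\<in>S. d u * ((INF \<tau>\<in>T. f u \<tau>) + e'))"
        using \<sigma>(2) \<tau>s d by (intro sum_mono mult_left_mono) (auto intro: less_imp_le)
      also have "\<dots> = (\<Sum>u\<in>S. d u * (INF \<tau>\<in>T. f u \<tau>)) + D * e'"
        by (simp add: D_def distrib_left sum.distrib sum_distrib_right)
      also have "D * e' \<le> e" unfolding e'_def using D e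
        by (simp add: field_simps)
      finally show "(INF \<sigma>\<in>T. \<Sum>u\<in>S. d u * h \<sigma> u) \<le> (\<Sum>u\<in>S. d u * (INF \<tau>\<in>T. f u \<tau>)) + e"
        by simp
    qed
    show "(\<Sum>u\<in>S. d u * (INF \<tau>\<in>T. f u \<tau>)) \<le> (INF \<sigma>\<in>T. \<Sum>u\<in>S. d u * h \<sigma> u)"
      by (rule cINF_greatest[OF T hge])
  qed
qed

lemma Sup_neg_Inf: "(SUP x\<in>T. g x) = - (INF x\<in>T. - g x :: real)"
proof -
  have "(INF x\<in>T. - g x) = - Sup (uminus ` (\<lambda>x. - g x) ` T)" by (simp add: Inf_real_def)
  also have "uminus ` (\<lambda>x. - g x) ` T = g ` T" by (simp add: image_image)
  finally show ?thesis by simp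
qed

lemma sup_split:
  fixes h :: "'a \<Rightarrow> 'u \<Rightarrow> real" and f :: "'u \<Rightarrow> 'a \<Rightarrow> real"
  assumes S: "finite S" and d: "\<And>u. u \<in> S \<Longrightarrow> d u \<ge> 0" and T: "T \<noteq> {}"
    and fb: "\<And>u \<tau>. u \<in> S \<Longrightarrow> \<tau> \<in> T \<Longrightarrow> \<bar>f u \<tau>\<bar> \<le> B"
    and comp: "\<And>\<sigma> u. \<sigma> \<in> T \<Longrightarrow> u \<in> S \<Longrightarrow> \<exists>\<tau>\<in>T. h \<sigma> u = f u \<tau>"
    and glue: "\<And>\<tau>s. (\<And>u. u \<in> S \<Longrightarrow> \<tau>s u \<in> T) \<Longrightarrow> \<exists>\<sigma>\<in>T. \<forall>u\<in>S. h \<sigma> u = f u (\<tau>s u)"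
  shows "(SUP \<sigma>\<in>T. \<Sum>u\<in>S. d u * h \<sigma> u) = (\<Sum>u\<in>S. d u * (SUP \<tau>\<in>T. f u \<tau>))"
proof -
  have "(INF \<sigma>\<in>T. \<Sum>u\<in>S. d u * (- h \<sigma> u)) = (\<Sum>u\<in>S. d u * (INF \<tau>\<in>T. - f u \<tau>))"
    by (rule inf_split[OF S d T, where f="\<lambda>u \<tau>. - f u \<tau>" and B=B and h="\<lambda>\<sigma> u. - h \<sigma> u"])
       (use fb comp glue in \<open>force+\<close>)
  then show ?thesis
    by (simp add: Sup_neg_Inf[of _ T] sum_negf flip: sum_negf)
qed


context
  fixes E :: "('v::finite \<times> 'v) set" and V1 V2 Vp :: "'v set" and \<delta> :: "'v \<Rightarrow> 'v \<Rightarrow> rat"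
  assumes game: "stochastic_game E V1 V2 Vp \<delta>"
begin

definition stepd :: "'v \<Rightarrow> 'v pmf" where
  "stepd x = embed_pmf (\<lambda>u. if u \<in> succs E x then real_of_rat (\<delta> x u) else 0)"

lemma pmf_stepd:
  assumes "x \<in> Vp"
  shows "pmf (stepd x) u = (if u \<in> succs E x then real_of_rat (\<delta> x u) else 0)"
  unfolding stepd_def
proof (rule pmf_embed_pmf)
  have pos: "\<forall>u\<in>succs E x. \<delta> x u > 0" and s1: "(\<Sum>u\<in>succs E x. \<delta> x u) = 1"
    using game assms unfolding stochastic_game_def by auto
  show "\<And>u. 0 \<le> (if u \<in> succs E x then real_of_rat (\<delta> x u) else 0)"
    using pos by (auto simp: less_imp_le)
  have "(\<integral>\<^sup>+ u. ennreal (if u \<in> succs E x then real_of_rat (\<delta> x u) else 0) \<partial>count_space UNIV)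
      = (\<Sum>u\<in>UNIV. ennreal (if u \<in> succs E x then real_of_rat (\<delta> x u) else 0))"
    by (simp add: nn_integral_count_space_finite)
  also have "\<dots> = ennreal (\<Sum>u\<in>UNIV. (if u \<in> succs E x then real_of_rat (\<delta> x u) else 0))"
    using pos by (intro sum_ennreal) (auto simp: less_imp_le)
  also have "(\<Sum>u\<in>UNIV. (if u \<in> succs E x then real_of_rat (\<delta> x u) else 0)) = (\<Sum>u\<in>succs E x. real_of_rat (\<delta> x u))"
    by (simp add: sum.If_cases)
  also have "\<dots> = 1" using s1 by (simp flip: of_rat_sum)
  finally show "(\<integral>\<^sup>+ u. ennreal (if u \<in> succs E x then real_of_rat (\<delta> x u) else 0) \<partial>count_space UNIV) = 1"
    by simp
qed

definition stepP :: "('v list \<Rightarrow> 'v) \<Rightarrow> ('v list \<Rightarrow> 'v) \<Rightarrow> 'v list \<Rightarrow> 'v pmf" where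
  "stepP \<sigma>1 \<sigma>2 h = (if last h \<in> V1 then return_pmf (\<sigma>1 h) else if last h \<in> V2 then return_pmf (\<sigma>2 h)
     else stepd (last h))"

lemma pmf_stepP: "pmf (stepP \<sigma>1 \<sigma>2 h) u = step_prob E V1 V2 \<delta> \<sigma>1 \<sigma>2 h u"
proof -
  have "last h \<notin> V1 \<Longrightarrow> last h \<notin> V2 \<Longrightarrow> last h \<in> Vp" using game unfolding stochastic_game_def by blast
  then show ?thesis unfolding stepP_def step_prob_def by (auto simp: pmf_stepd pmf_return)
qed

fun hist :: "('v list \<Rightarrow> 'v) \<Rightarrow> 'v \<Rightarrow> nat \<Rightarrow> 'v list" where
  "hist x v 0 = [v]"
| "hist x v (Suc n) = hist x v n @ [x (hist x v n)]"

lemma length_hist[simp]: "length (hist x v n) = Suc n"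
  by (induction n) auto

lemma hist_ne[simp]: "hist x v n \<noteq> []"
  using length_hist[of x v n] by (metis list.size(3) nat.distinct(1))

lemma take_hist: "i \<le> n \<Longrightarrow> take (Suc i) (hist x v n) = hist x v i"
proof (induction n)
  case (Suc n)
  then show ?case by (cases "i = Suc n") auto
qed auto

lemma nth_hist: "i \<le> n \<Longrightarrow> hist x v n ! i = last (hist x v i)"
proof -
  assume "i \<le> n"
  then have "last (hist x v i) = last (take (Suc i) (hist x v n))" by (simp add: take_hist)
  also have "\<dots> = hist x v n ! i" using \<open>i \<le> n\<close> by (simp add: last_conv_nth min_def)
  finally show ?thesis by simp
qed

definition playF :: "'v \<Rightarrow> ('v list \<Rightarrow> 'v) \<Rightarrow> 'v stream" where
  "playF v x = to_stream (\<lambda>n. last (hist x v n))"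

lemma snth_playF: "playF v x !! n = last (hist x v n)"
  by (simp add: playF_def to_stream_def)

lemma stake_playF: "stake (Suc n) (playF v x) = hist x v n"
  by (rule nth_equalityI) (auto simp: snth_playF nth_hist stake_nth simp del: stake.simps)

lemma hist_eq_iff:
  "length h = Suc k \<Longrightarrow> hist x v k = h \<longleftrightarrow> hd h = v \<and> (\<forall>i<k. x (take (Suc i) h) = h ! Suc i)"
proof (induction k arbitrary: h)
  case 0
  then show ?case by (cases h) auto
next
  case (Suc k)
  obtain h' a where h: "h = h' @ [a]" using Suc.prems by (metis length_Suc_conv_rev)
  have lh': "length h' = Suc k" using Suc.prems h by simp
  have hd: "hd h = hd h'" using lh' h by (cases h') auto
  have tk: "\<And>i. i < k \<Longrightarrow> take (Suc i) h = take (Suc i) h'" using h lh' by simp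
  have nt: "\<And>i. i < k \<Longrightarrow> h ! Suc i = h' ! Suc i" using h lh' by (simp add: nth_append)
  have "hist x v (Suc k) = h \<longleftrightarrow> hist x v k = h' \<and> x h' = a"
    using h by (auto simp: h)
  also have "\<dots> \<longleftrightarrow> hd h' = v \<and> (\<forall>i<k. x (take (Suc i) h') = h' ! Suc i) \<and> x h' = a"
    using Suc.IH[OF lh'] by auto
  also have "\<dots> \<longleftrightarrow> hd h = v \<and> (\<forall>i<Suc k. x (take (Suc i) h) = h ! Suc i)"
    using hd tk nt h lh' by (auto simp: less_Suc_eq nth_append)
  finally show ?case .
qed

lemma measurable_hist:
  "(\<lambda>x. hist x v n) \<in> measurable (Pi\<^sub>M UNIV M) (count_space UNIV)"
  if "\<And>h. sets (M h) = UNIV"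
proof (induction n)
  case 0
  then show ?case by simp
next
  case (Suc n)
  have "(\<lambda>x. (\<lambda>i x. i @ [x i]) (hist x v n) x) \<in> measurable (Pi\<^sub>M UNIV M) (count_space UNIV)"
  proof (rule measurable_compose_countable[OF _ Suc.IH])
    fix i :: "'v list"
    have "(\<lambda>x. x i) \<in> measurable (Pi\<^sub>M UNIV M) (M i)" by (rule measurable_component_singleton) simp
    moreover have "M i = M i" ..
    then have "(\<lambda>a. i @ [a]) \<in> measurable (M i) (count_space UNIV)"
      using that[of i] by (auto simp: measurable_def)
    ultimately show "(\<lambda>x. i @ [x i]) \<in> measurable (Pi\<^sub>M UNIV M) (count_space UNIV)"
      by (rule measurable_compose)
  qed
  then show ?case by simp
qed

lemma measurable_playF:
  "playF v \<in> measurable (Pi\<^sub>M UNIV M) (stream_space (count_space UNIV))"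
  if "\<And>h. sets (M h) = UNIV"
proof (rule measurable_stream_space2)
  fix n
  have "(\<lambda>x. last (hist x v n)) \<in> measurable (Pi\<^sub>M UNIV M) (count_space UNIV)"
    by (rule measurable_compose[OF measurable_hist[OF that]]) simp
  then show "(\<lambda>x. playF v x !! n) \<in> measurable (Pi\<^sub>M UNIV M) (count_space UNIV)"
    by (simp add: snth_playF)
qed

definition spec_ok :: "('v list \<Rightarrow> 'v) \<Rightarrow> ('v list \<Rightarrow> 'v) \<Rightarrow> 'v \<Rightarrow> 'v stream measure \<Rightarrow> bool" where
  "spec_ok \<sigma>1 \<sigma>2 v M \<longleftrightarrow> sets M = sets (stream_space (count_space UNIV)) \<and> prob_space M \<and>
        (\<forall>h. h \<noteq> [] \<longrightarrow>
           measure M {\<omega> \<in> space M. stake (length h) \<omega> = h} = prefix_prob E V1 V2 \<delta> \<sigma>1 \<sigma>2 v h)"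

lemma prefix_prob_nonneg: "prefix_prob E V1 V2 \<delta> \<sigma>1 \<sigma>2 v h \<ge> 0"
  unfolding prefix_prob_def by (auto intro!: prod_nonneg simp flip: pmf_stepP)

lemma spec_exists: "\<exists>M. spec_ok \<sigma>1 \<sigma>2 v M"
proof -
  define Ms where "Ms = (\<lambda>h. measure_pmf (stepP \<sigma>1 \<sigma>2 h))"
  define PM where "PM = Pi\<^sub>M UNIV Ms"
  interpret P: product_prob_space Ms UNIV
    unfolding Ms_def by (intro product_prob_spaceI) (simp add: measure_pmf.prob_space_axioms)
  have setsMs: "\<And>h. sets (Ms h) = UNIV" by (simp add: Ms_def)
  have mF: "playF v \<in> measurable PM (stream_space (count_space UNIV))"
    unfolding PM_def by (rule measurable_playF[OF setsMs])
  define M where "M = distr PM (stream_space (count_space UNIV)) (playF v)"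
  have sets: "sets M = sets (stream_space (count_space UNIV))" by (simp add: M_def)
  have ps: "prob_space M" unfolding M_def PM_def
    by (rule P.prob_space_distr) (use mF PM_def in simp)
  have cyl: "measure M {\<omega> \<in> space M. stake (length h) \<omega> = h} = prefix_prob E V1 V2 \<delta> \<sigma>1 \<sigma>2 v h"
    if hne: "h \<noteq> []" for h
  proof -
    obtain k where lk: "length h = Suc k" using hne by (cases h) auto
    have mset: "{\<omega> \<in> space M. stake (length h) \<omega> = h} \<in> sets (stream_space (count_space UNIV))"
      unfolding sets_eq_imp_space_eq[OF sets] by measurable
    have "emeasure M {\<omega> \<in> space M. stake (length h) \<omega> = h}
        = emeasure PM (playF v -` {\<omega> \<in> space M. stake (length h) \<omega> = h} \<inter> space PM)"
      unfolding M_def using mF mset by (simp add: emeasure_distr)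
    also have "playF v -` {\<omega> \<in> space M. stake (length h) \<omega> = h} \<inter> space PM
        = {x \<in> space PM. hist x v k = h}"
      using stake_playF[of k v] by (auto simp: M_def space_stream_space lk simp del: stake.simps)
    also have "emeasure PM {x \<in> space PM. hist x v k = h} = ennreal (prefix_prob E V1 V2 \<delta> \<sigma>1 \<sigma>2 v h)"
    proof (cases "hd h = v")
      case False
      then show ?thesis using hist_eq_iff[OF lk] by (simp add: prefix_prob_def hne[THEN hd_conv_nth])
    next
      case True
      define J where "J = (\<lambda>i. take (Suc i) h) ` {..<k}"
      have inj: "inj_on (\<lambda>i. take (Suc i) h) {..<k}"
        by (rule inj_onI) (metis Suc_inject Suc_le_eq le_imp_less_Suc length_take lk lessThan_iff less_imp_le_nat min.absorb4 order.strict_trans not_less_eq)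
      have "{x \<in> space PM. hist x v k = h} = {x \<in> space PM. \<forall>j\<in>J. x j \<in> {h ! length j}}"
        using hist_eq_iff[OF lk] True lk by (auto simp: J_def min_def)
      also have "emeasure PM \<dots> = (\<Prod>j\<in>J. emeasure (Ms j) {h ! length j})"
        unfolding PM_def by (rule P.emeasure_PiM_Collect) (auto simp: J_def setsMs)
      also have "\<dots> = (\<Prod>i<k. emeasure (Ms (take (Suc i) h)) {h ! Suc i})"
        unfolding J_def using lk by (subst prod.reindex[OF inj]) (auto simp: min_def intro!: prod.cong)
      also have "\<dots> = (\<Prod>i<k. ennreal (step_prob E V1 V2 \<delta> \<sigma>1 \<sigma>2 (take (Suc i) h) (h ! Suc i)))"
        by (simp add: Ms_def emeasure_pmf_single pmf_stepP)
      also have "\<dots> = ennreal (\<Prod>i<k. step_prob E V1 V2 \<delta> \<sigma>1 \<sigma>2 (take (Suc i) h) (h ! Suc i))"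
        by (rule prod_ennreal) (simp flip: pmf_stepP)
      finally show ?thesis using True lk by (simp add: prefix_prob_def)
    qed
    finally show ?thesis
      by (simp add: measure_def prefix_prob_nonneg)
  qed
  show ?thesis using sets ps cyl unfolding spec_ok_def by blast
qed

lemma play_measure_ok: "spec_ok \<sigma>1 \<sigma>2 v (play_measure E V1 V2 \<delta> \<sigma>1 \<sigma>2 v)"
  using someI_ex[OF spec_exists[of \<sigma>1 \<sigma>2 v]] unfolding play_measure_def spec_ok_def by simp

lemma play_measure_sets: "sets (play_measure E V1 V2 \<delta> \<sigma>1 \<sigma>2 v) = sets (stream_space (count_space UNIV))"
  using play_measure_ok[of \<sigma>1 \<sigma>2 v] unfolding spec_ok_def by auto

lemma sstart_UNIV: "sstart UNIV xs = {\<omega>. stake (length xs) \<omega> = xs}"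
proof -
  have "\<omega> \<in> sstart UNIV xs \<longleftrightarrow> stake (length xs) \<omega> = xs" for \<omega>
  proof -
    have "\<omega> \<in> sstart UNIV xs \<longleftrightarrow> (\<forall>i<length xs. \<omega> !! i = xs ! i)" by (simp add: sstart_eq)
    also have "\<dots> \<longleftrightarrow> stake (length xs) \<omega> = xs"
      by (auto simp: list_eq_iff_nth_eq stake_nth simp del: stake.simps)
    finally show ?thesis .
  qed
  then show ?thesis by auto
qed

lemma stream_measure_eq:
  fixes M N :: "'a::countable stream measure"
  assumes sM: "sets M = sets (stream_space (count_space UNIV))"
    and sN: "sets N = sets (stream_space (count_space UNIV))"
    and pM: "prob_space M" and pN: "prob_space N"
    and cyl: "\<And>h. h \<noteq> [] \<Longrightarrow> measure M {\<omega> \<in> space M. stake (length h) \<omega> = h}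
                              = measure N {\<omega> \<in> space N. stake (length h) \<omega> = h}"
  shows "M = N"
proof (rule stream_space_eq_sstart[where S=UNIV])
  have spM: "space M = UNIV" using sets_eq_imp_space_eq[OF sM] by (simp add: space_stream_space)
  have spN: "space N = UNIV" using sets_eq_imp_space_eq[OF sN] by (simp add: space_stream_space)
  fix xs :: "'a list" assume "xs \<noteq> []"
  interpret pM: prob_space M by fact
  interpret pN: prob_space N by fact
  show "emeasure M (sstart UNIV xs) = emeasure N (sstart UNIV xs)"
    using cyl[of xs] spM spN \<open>xs \<noteq> []\<close>
    by (simp add: sstart_UNIV pM.emeasure_eq_measure pN.emeasure_eq_measure)
qed (use assms in auto)

lemma spec_unique: "spec_ok \<sigma>1 \<sigma>2 v M \<Longrightarrow> spec_ok \<sigma>1 \<sigma>2 v N \<Longrightarrow> M = N"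
  unfolding spec_ok_def by (intro stream_measure_eq) auto

lemma play_measure_eqI: "spec_ok \<sigma>1 \<sigma>2 v M \<Longrightarrow> play_measure E V1 V2 \<delta> \<sigma>1 \<sigma>2 v = M"
  using spec_unique play_measure_ok by blast

lemma prefix_prob_local:
  assumes "\<And>h. h \<noteq> [] \<Longrightarrow> hd h = v \<Longrightarrow> \<sigma>1 h = \<sigma>1' h \<and> \<sigma>2 h = \<sigma>2' h"
  shows "prefix_prob E V1 V2 \<delta> \<sigma>1 \<sigma>2 v h = prefix_prob E V1 V2 \<delta> \<sigma>1' \<sigma>2' v h"
proof (cases "hd h = v")
  case True
  have "step_prob E V1 V2 \<delta> \<sigma>1 \<sigma>2 (take (Suc i) h) (h ! Suc i) = step_prob E V1 V2 \<delta> \<sigma>1' \<sigma>2' (take (Suc i) h) (h ! Suc i)"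
    if "i < length h - 1" for i
  proof -
    have ne: "take (Suc i) h \<noteq> []" "hd (take (Suc i) h) = v" using that True by (cases h; auto)+
    show ?thesis using assms[OF ne] unfolding step_prob_def by simp
  qed
  then show ?thesis unfolding prefix_prob_def by (auto intro!: prod.cong)
qed (simp add: prefix_prob_def)

lemma play_measure_local:
  assumes "\<And>h. h \<noteq> [] \<Longrightarrow> hd h = v \<Longrightarrow> \<sigma>1 h = \<sigma>1' h \<and> \<sigma>2 h = \<sigma>2' h"
  shows "play_measure E V1 V2 \<delta> \<sigma>1 \<sigma>2 v = play_measure E V1 V2 \<delta> \<sigma>1' \<sigma>2' v"
proof -
  have pp: "prefix_prob E V1 V2 \<delta> \<sigma>1 \<sigma>2 v h = prefix_prob E V1 V2 \<delta> \<sigma>1' \<sigma>2' v h" for h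
    by (rule prefix_prob_local) (use assms in blast)
  have "spec_ok \<sigma>1' \<sigma>2' v (play_measure E V1 V2 \<delta> \<sigma>1 \<sigma>2 v)"
    using play_measure_ok[of \<sigma>1 \<sigma>2 v] unfolding spec_ok_def pp by blast
  then show ?thesis by (rule play_measure_eqI[symmetric])
qed

lemma step_prob_edge:
  assumes s1: "\<sigma>1 \<in> strategies E V1" and s2: "\<sigma>2 \<in> strategies E V2"
    and ne: "h \<noteq> []" and nz: "step_prob E V1 V2 \<delta> \<sigma>1 \<sigma>2 h u \<noteq> 0"
  shows "u \<in> succs E (last h)"
  using nz s1 s2 ne unfolding step_prob_def strategies_def by (auto split: if_splits)

lemma AE_cyl_zero:
  assumes "h \<noteq> []" "prefix_prob E V1 V2 \<delta> \<sigma>1 \<sigma>2 v h = 0"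
  shows "AE \<omega> in play_measure E V1 V2 \<delta> \<sigma>1 \<sigma>2 v. stake (length h) \<omega> \<noteq> h"
proof -
  let ?M = "play_measure E V1 V2 \<delta> \<sigma>1 \<sigma>2 v"
  have ok: "sets ?M = sets (stream_space (count_space UNIV))" "prob_space ?M"
    and cyl: "measure ?M {\<omega> \<in> space ?M. stake (length h) \<omega> = h} = 0"
    using play_measure_ok[of \<sigma>1 \<sigma>2 v] assms unfolding spec_ok_def by auto
  interpret prob_space ?M by fact
  have ms: "{\<omega> \<in> space ?M. stake (length h) \<omega> = h} \<in> sets ?M"
    unfolding ok(1) sets_eq_imp_space_eq[OF ok(1)] by measurable
  show ?thesis
    by (rule AE_I'[of "{\<omega> \<in> space ?M. stake (length h) \<omega> = h}"])
       (use ms cyl in \<open>auto simp: emeasure_eq_measure\<close>)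
qed

lemma AE_play:
  assumes s1: "\<sigma>1 \<in> strategies E V1" and s2: "\<sigma>2 \<in> strategies E V2"
  shows "AE \<omega> in play_measure E V1 V2 \<delta> \<sigma>1 \<sigma>2 v. is_play E \<omega> \<and> shd \<omega> = v"
proof -
  let ?pp = "prefix_prob E V1 V2 \<delta> \<sigma>1 \<sigma>2 v"
  have "AE \<omega> in play_measure E V1 V2 \<delta> \<sigma>1 \<sigma>2 v. \<forall>h. h \<noteq> [] \<and> ?pp h = 0 \<longrightarrow> stake (length h) \<omega> \<noteq> h"
    by (subst AE_all_countable) (auto intro: AE_cyl_zero)
  then show ?thesis
  proof (rule AE_mp, intro AE_I2 impI)
    fix \<omega> :: "'v stream" assume H: "\<forall>h. h \<noteq> [] \<and> ?pp h = 0 \<longrightarrow> stake (length h) \<omega> \<noteq> h"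
    have nz: "?pp (stake (Suc n) \<omega>) \<noteq> 0" for n
      using H[rule_format, of "stake (Suc n) \<omega>"] by (auto simp del: stake.simps)
    have "shd \<omega> = v" using nz[of 0] by (auto simp: prefix_prob_def split: if_splits)
    moreover have "(\<omega> !! i, \<omega> !! Suc i) \<in> E" for i
    proof -
      let ?h = "stake (Suc (Suc i)) \<omega>"
      have "(\<Prod>j<length ?h - 1. step_prob E V1 V2 \<delta> \<sigma>1 \<sigma>2 (take (Suc j) ?h) (?h ! Suc j)) \<noteq> 0"
        using nz[of "Suc i"] by (auto simp: prefix_prob_def split: if_splits simp del: stake.simps)
      then have "step_prob E V1 V2 \<delta> \<sigma>1 \<sigma>2 (take (Suc i) ?h) (?h ! Suc i) \<noteq> 0"
        by (auto simp del: stake.simps)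
      moreover have "take (Suc i) ?h = stake (Suc i) \<omega>"
        by (simp add: take_stake del: stake.simps)
      moreover have "?h ! Suc i = \<omega> !! Suc i" by (simp add: stake_nth del: stake.simps)
      moreover have "last (stake (Suc i) \<omega>) = \<omega> !! i"
        by (simp add: last_conv_nth stake_nth del: stake.simps)
      moreover have "stake (Suc i) \<omega> \<noteq> []" by simp
      ultimately have "\<omega> !! Suc i \<in> succs E (\<omega> !! i)"
        using step_prob_edge[OF s1 s2] by metis
      then show ?thesis by (simp add: succs_def)
    qed
    ultimately show "is_play E \<omega> \<and> shd \<omega> = v" by (simp add: is_play_def)
  qed
qed

definition sh :: "'v \<Rightarrow> ('v list \<Rightarrow> 'v) \<Rightarrow> ('v list \<Rightarrow> 'v)" where
  "sh v \<sigma> = (\<lambda>h. \<sigma> (v # h))"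

lemma sh_strat: "\<sigma> \<in> strategies E Vi \<Longrightarrow> sh v \<sigma> \<in> strategies E Vi"
  unfolding strategies_def sh_def by auto

lemma step_prob_sh:
  "l \<noteq> [] \<Longrightarrow> step_prob E V1 V2 \<delta> \<sigma>1 \<sigma>2 (v # l) x = step_prob E V1 V2 \<delta> (sh v \<sigma>1) (sh v \<sigma>2) l x"
  unfolding step_prob_def sh_def by simp

lemma Vp_not: "v \<in> Vp \<Longrightarrow> v \<notin> V1 \<and> v \<notin> V2"
  using game unfolding stochastic_game_def by blast

lemma prefix_prob_Vp:
  assumes v: "v \<in> Vp" and hne: "h \<noteq> []"
  shows "(\<Sum>u\<in>UNIV. pmf (stepd v) u *
           (if hd h = v then (if tl h = [] then 1 else prefix_prob E V1 V2 \<delta> (sh v \<sigma>1) (sh v \<sigma>2) u (tl h)) else 0))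
         = prefix_prob E V1 V2 \<delta> \<sigma>1 \<sigma>2 v h" (is "?L = ?R")
proof -
  obtain a h' where h: "h = a # h'" using hne by (cases h) auto
  show ?thesis
  proof (cases "a = v")
    case False then show ?thesis by (simp add: h prefix_prob_def)
  next
    case True
    show ?thesis
    proof (cases h')
      case Nil
      then show ?thesis using True h by (simp add: prefix_prob_def sum_pmf_eq_1)
    next
      case (Cons b t)
      let ?P = "(\<Prod>i<length t. step_prob E V1 V2 \<delta> (sh v \<sigma>1) (sh v \<sigma>2) (take (Suc i) (b # t)) ((b # t) ! Suc i))"
      have "?L = (\<Sum>u\<in>UNIV. pmf (stepd v) u * (if b = u then ?P else 0))"
        using True h Cons by (auto simp: prefix_prob_def intro!: sum.cong)
      also have "\<dots> = pmf (stepd v) b * ?P"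
        by (simp add: if_distrib sum.delta cong: if_cong)
      also have "pmf (stepd v) b = step_prob E V1 V2 \<delta> \<sigma>1 \<sigma>2 [v] b"
        using Vp_not[OF v] v by (simp add: step_prob_def pmf_stepd)
      also have "?P = (\<Prod>i<length t. step_prob E V1 V2 \<delta> \<sigma>1 \<sigma>2 (take (Suc (Suc i)) (v # b # t)) ((v # b # t) ! Suc (Suc i)))"
        by (intro prod.cong refl) (simp add: step_prob_sh)
      also have "step_prob E V1 V2 \<delta> \<sigma>1 \<sigma>2 [v] b * \<dots> = ?R"
        using True h Cons by (simp add: prefix_prob_def prod.lessThan_Suc_shift del: lessThan_Suc prod.lessThan_Suc)
      finally show ?thesis .
    qed
  qed
qed

abbreviation "SS \<equiv> stream_space (count_space (UNIV :: 'v set))"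

lemma decomp_measure:
  assumes v: "v \<in> Vp"
  shows "play_measure E V1 V2 \<delta> \<sigma>1 \<sigma>2 v =
    measure_pmf (stepd v) \<bind> (\<lambda>u. distr (play_measure E V1 V2 \<delta> (sh v \<sigma>1) (sh v \<sigma>2) u) SS (\<lambda>\<omega>. v ## \<omega>))"
proof (rule play_measure_eqI)
  define K where "K = (\<lambda>u. distr (play_measure E V1 V2 \<delta> (sh v \<sigma>1) (sh v \<sigma>2) u) SS (\<lambda>\<omega>. v ## \<omega>))"
  have okU: "spec_ok (sh v \<sigma>1) (sh v \<sigma>2) u (play_measure E V1 V2 \<delta> (sh v \<sigma>1) (sh v \<sigma>2) u)" for u
    by (rule play_measure_ok)
  have mcons: "(\<lambda>\<omega>. v ## \<omega>) \<in> measurable SS SS" by measurable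
  have mcons': "(\<lambda>\<omega>. v ## \<omega>) \<in> measurable (play_measure E V1 V2 \<delta> (sh v \<sigma>1) (sh v \<sigma>2) u) SS" for u
    using okU[of u] mcons unfolding spec_ok_def by (simp cong: measurable_cong_sets)
  have Kspace: "K u \<in> space (prob_algebra SS)" for u
    using okU[of u] mcons' unfolding spec_ok_def K_def space_prob_algebra
    by (auto intro!: prob_space.prob_space_distr)
  have Km: "K \<in> measure_pmf (stepd v) \<rightarrow>\<^sub>M prob_algebra SS"
    using Kspace by simp
  have A: "measure_pmf (stepd v) \<in> space (prob_algebra (measure_pmf (stepd v)))"
    by (simp add: space_prob_algebra measure_pmf.prob_space_axioms)
  have sB: "sets (measure_pmf (stepd v) \<bind> K) = sets SS" by (rule sets_bind'[OF A Km])
  have pB: "prob_space (measure_pmf (stepd v) \<bind> K)" by (rule prob_space_bind'[OF A Km])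
  have spB: "space (measure_pmf (stepd v) \<bind> K) = UNIV"
    using sets_eq_imp_space_eq[OF sB] by (simp add: space_stream_space)
  have cyl: "measure (measure_pmf (stepd v) \<bind> K) {\<omega> \<in> space (measure_pmf (stepd v) \<bind> K). stake (length h) \<omega> = h}
        = prefix_prob E V1 V2 \<delta> \<sigma>1 \<sigma>2 v h" if hne: "h \<noteq> []" for h
  proof -
    define X where "X = {\<omega>::'v stream. stake (length h) \<omega> = h}"
    have XS: "X \<in> sets SS" unfolding X_def
      using sets_sstart[of UNIV h] by (simp add: sstart_UNIV)
    define f where "f u = (if hd h = v then (if tl h = [] then 1 else prefix_prob E V1 V2 \<delta> (sh v \<sigma>1) (sh v \<sigma>2) u (tl h)) else 0)" for u
    have f0: "f u \<ge> 0" for u unfolding f_def by (simp add: prefix_prob_nonneg)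
    have eK: "emeasure (K u) X = ennreal (f u)" for u
    proof -
      let ?M = "play_measure E V1 V2 \<delta> (sh v \<sigma>1) (sh v \<sigma>2) u"
      have sM: "sets ?M = sets SS" and pM: "prob_space ?M"
        and cM: "\<And>h. h \<noteq> [] \<Longrightarrow> measure ?M {\<omega> \<in> space ?M. stake (length h) \<omega> = h} = prefix_prob E V1 V2 \<delta> (sh v \<sigma>1) (sh v \<sigma>2) u h"
        using okU[of u] unfolding spec_ok_def by auto
      interpret pM: prob_space ?M by fact
      have spM: "space ?M = UNIV" using sets_eq_imp_space_eq[OF sM] by (simp add: space_stream_space)
      obtain a h' where h: "h = a # h'" using hne by (cases h) auto
      have "emeasure (K u) X = emeasure ?M ((\<lambda>\<omega>. v ## \<omega>) -` X \<inter> space ?M)"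
        unfolding K_def by (rule emeasure_distr[OF mcons' XS])
      also have "(\<lambda>\<omega>. v ## \<omega>) -` X \<inter> space ?M = (if a = v then {\<omega> \<in> space ?M. stake (length h') \<omega> = h'} else {})"
        by (auto simp: X_def h spM)
      also have "emeasure ?M \<dots> = ennreal (f u)"
      proof (cases "a = v")
        case True
        show ?thesis
        proof (cases "h' = []")
          case True
          then show ?thesis using \<open>a = v\<close> by (simp add: f_def h spM pM.emeasure_space_1[unfolded spM])
        next
          case False
          then show ?thesis using \<open>a = v\<close> cM[OF False]
            by (simp add: f_def h pM.emeasure_eq_measure)
        qed
      qed (simp add: f_def h)
      finally show ?thesis .
    qed
    have "emeasure (measure_pmf (stepd v) \<bind> K) X = (\<integral>\<^sup>+u. emeasure (K u) X \<partial>measure_pmf (stepd v))"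
      by (rule emeasure_bind_prob_algebra[OF A Km XS])
    also have "\<dots> = (\<Sum>u\<in>UNIV. ennreal (pmf (stepd v) u) * ennreal (f u))"
      by (simp add: nn_integral_measure_pmf nn_integral_count_space_finite eK)
    also have "\<dots> = ennreal (\<Sum>u\<in>UNIV. pmf (stepd v) u * f u)"
      using f0 by (subst sum_ennreal[symmetric]) (auto simp: ennreal_mult)
    also have "(\<Sum>u\<in>UNIV. pmf (stepd v) u * f u) = prefix_prob E V1 V2 \<delta> \<sigma>1 \<sigma>2 v h"
      unfolding f_def by (rule prefix_prob_Vp[OF v hne])
    finally have "emeasure (measure_pmf (stepd v) \<bind> K) X = ennreal (prefix_prob E V1 V2 \<delta> \<sigma>1 \<sigma>2 v h)" .
    then show ?thesis
      unfolding spB by (simp add: X_def measure_def prefix_prob_nonneg)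
  qed
  show "spec_ok \<sigma>1 \<sigma>2 v (measure_pmf (stepd v) \<bind> (\<lambda>u. distr (play_measure E V1 V2 \<delta> (sh v \<sigma>1) (sh v \<sigma>2) u) SS ((##) v)))"
    using sB pB cyl unfolding spec_ok_def K_def[symmetric] by blast
qed

lemma expected_decomp:
  assumes v: "v \<in> Vp" and s1: "\<sigma>1 \<in> strategies E V1" and s2: "\<sigma>2 \<in> strategies E V2"
    and mphi: "\<phi> \<in> borel_measurable SS" and bphi: "\<And>\<omega>. \<bar>\<phi> \<omega>\<bar> \<le> B"
    and pi: "\<And>\<omega>. is_play E \<omega> \<Longrightarrow> (v, shd \<omega>) \<in> E \<Longrightarrow> \<phi> (v ## \<omega>) = \<phi> \<omega>"
  shows "expected E V1 V2 \<delta> \<sigma>1 \<sigma>2 v \<phi> =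
    (\<Sum>u\<in>succs E v. real_of_rat (\<delta> v u) * expected E V1 V2 \<delta> (sh v \<sigma>1) (sh v \<sigma>2) u \<phi>)"
proof -
  define K where "K = (\<lambda>u. distr (play_measure E V1 V2 \<delta> (sh v \<sigma>1) (sh v \<sigma>2) u) SS (\<lambda>\<omega>. v ## \<omega>))"
  have okU: "spec_ok (sh v \<sigma>1) (sh v \<sigma>2) u (play_measure E V1 V2 \<delta> (sh v \<sigma>1) (sh v \<sigma>2) u)" for u
    by (rule play_measure_ok)
  have mcons: "(\<lambda>\<omega>. v ## \<omega>) \<in> measurable SS SS" by measurable
  have mcons': "(\<lambda>\<omega>. v ## \<omega>) \<in> measurable (play_measure E V1 V2 \<delta> (sh v \<sigma>1) (sh v \<sigma>2) u) SS" for u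
    using okU[of u] mcons unfolding spec_ok_def by (simp cong: measurable_cong_sets)
  have sK: "sets (K u) = sets SS" for u by (simp add: K_def)
  have pK: "prob_space (K u)" for u
    using okU[of u] mcons' unfolding spec_ok_def K_def
    by (auto intro!: prob_space.prob_space_distr)
  have Km: "K \<in> measurable (measure_pmf (stepd v)) (subprob_algebra SS)"
    using sK pK by (auto simp: space_subprob_algebra prob_space_imp_subprob_space)
  have "expected E V1 V2 \<delta> \<sigma>1 \<sigma>2 v \<phi> = integral\<^sup>L (measure_pmf (stepd v) \<bind> K) \<phi>"
    unfolding expected_def K_def by (subst decomp_measure[OF v]) rule
  also have "\<dots> = (\<integral>u. integral\<^sup>L (K u) \<phi> \<partial>measure_pmf (stepd v))"
  proof (rule integral_bind[OF mphi _ Km])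
    show "\<And>x. x \<in> space SS \<Longrightarrow> \<bar>\<phi> x\<bar> \<le> B" by (rule bphi)
    show "finite_measure (measure_pmf (stepd v))" by (rule measure_pmf.finite_measure_axioms)
    show "AE x in measure_pmf (stepd v). emeasure (K x) (space (K x)) \<le> ennreal 1"
      using pK by (simp add: prob_space.emeasure_space_1)
  qed
  also have "\<dots> = (\<Sum>u\<in>UNIV. pmf (stepd v) u *\<^sub>R integral\<^sup>L (K u) \<phi>)"
    by (rule integral_measure_pmf) auto
  also have "\<dots> = (\<Sum>u\<in>succs E v. real_of_rat (\<delta> v u) * expected E V1 V2 \<delta> (sh v \<sigma>1) (sh v \<sigma>2) u \<phi>)"
  proof -
    have "integral\<^sup>L (K u) \<phi> = expected E V1 V2 \<delta> (sh v \<sigma>1) (sh v \<sigma>2) u \<phi>" if "u \<in> succs E v" for u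
    proof -
      have "integral\<^sup>L (K u) \<phi> = (\<integral>\<omega>. \<phi> (v ## \<omega>) \<partial>play_measure E V1 V2 \<delta> (sh v \<sigma>1) (sh v \<sigma>2) u)"
        unfolding K_def by (rule integral_distr[OF mcons' mphi])
      also have "\<dots> = expected E V1 V2 \<delta> (sh v \<sigma>1) (sh v \<sigma>2) u \<phi>"
        unfolding expected_def
      proof (rule integral_cong_AE)
        show "AE \<omega> in play_measure E V1 V2 \<delta> (sh v \<sigma>1) (sh v \<sigma>2) u. \<phi> (v ## \<omega>) = \<phi> \<omega>"
          using AE_play[OF sh_strat[OF s1] sh_strat[OF s2], of u]
          by (rule AE_mp) (use that pi in \<open>auto simp: succs_def\<close>)
        show "(\<lambda>\<omega>. \<phi> (v ## \<omega>)) \<in> borel_measurable (play_measure E V1 V2 \<delta> (sh v \<sigma>1) (sh v \<sigma>2) u)"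
          using measurable_compose[OF mcons' mphi] by (simp add: comp_def)
        show "\<phi> \<in> borel_measurable (play_measure E V1 V2 \<delta> (sh v \<sigma>1) (sh v \<sigma>2) u)"
          using okU[of u] mphi unfolding spec_ok_def by (simp cong: measurable_cong_sets)
      qed
      finally show ?thesis .
    qed
    then have "(\<Sum>u\<in>UNIV. pmf (stepd v) u *\<^sub>R integral\<^sup>L (K u) \<phi>)
        = (\<Sum>u\<in>UNIV. if u \<in> succs E v then real_of_rat (\<delta> v u) * expected E V1 V2 \<delta> (sh v \<sigma>1) (sh v \<sigma>2) u \<phi> else 0)"
      using v by (intro sum.cong) (auto simp: pmf_stepd)
    then show ?thesis by (simp add: sum.If_cases)
  qed
  finally show ?thesis .
qed

lemma strategies_ne: "strategies E Vi \<noteq> {}"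
proof -
  have "\<forall>x. succs E x \<noteq> {}" using game unfolding stochastic_game_def by blast
  then have "(\<lambda>h. SOME u. u \<in> succs E (last h)) \<in> strategies E Vi"
    unfolding strategies_def by (auto simp: some_in_eq)
  then show ?thesis by blast
qed

definition glue :: "'v \<Rightarrow> 'v set \<Rightarrow> ('v \<Rightarrow> 'v list \<Rightarrow> 'v) \<Rightarrow> ('v list \<Rightarrow> 'v) \<Rightarrow> 'v list \<Rightarrow> 'v" where
  "glue v S \<tau>s \<sigma>0 = (\<lambda>h. case h of (a # u # t) \<Rightarrow> if a = v \<and> u \<in> S then \<tau>s u (u # t) else \<sigma>0 h | _ \<Rightarrow> \<sigma>0 h)"

lemma glue_strat:
  assumes "\<sigma>0 \<in> strategies E Vi" "\<And>u. u \<in> S \<Longrightarrow> \<tau>s u \<in> strategies E Vi"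
  shows "glue v S \<tau>s \<sigma>0 \<in> strategies E Vi"
  unfolding strategies_def
proof (intro CollectI allI impI)
  fix h :: "'v list" assume h: "h \<noteq> [] \<and> last h \<in> Vi"
  show "glue v S \<tau>s \<sigma>0 h \<in> succs E (last h)"
  proof (cases h rule: remdups_adj.cases)
    case (3 a u t)
    show ?thesis
    proof (cases "a = v \<and> u \<in> S")
      case True
      then have "glue v S \<tau>s \<sigma>0 h = \<tau>s u (u # t)" by (simp add: glue_def 3)
      moreover have "\<tau>s u (u # t) \<in> succs E (last (u # t))"
        using assms(2)[of u] True h 3 unfolding strategies_def by auto
      ultimately show ?thesis using 3 by simp
    next
      case False
      then have "glue v S \<tau>s \<sigma>0 h = \<sigma>0 h" by (auto simp: glue_def 3)
      then show ?thesis using assms(1) h unfolding strategies_def by auto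
    qed
  qed (use assms h in \<open>auto simp: glue_def strategies_def\<close>)
qed

lemma sh_glue: "u \<in> S \<Longrightarrow> h \<noteq> [] \<Longrightarrow> hd h = u \<Longrightarrow> sh v (glue v S \<tau>s \<sigma>0) h = \<tau>s u h"
  by (cases h) (auto simp: sh_def glue_def)

lemma expected_local:
  assumes "\<And>h. h \<noteq> [] \<Longrightarrow> hd h = u \<Longrightarrow> \<tau>1 h = \<tau>1' h \<and> \<tau>2 h = \<tau>2' h"
  shows "expected E V1 V2 \<delta> \<tau>1 \<tau>2 u \<phi> = expected E V1 V2 \<delta> \<tau>1' \<tau>2' u \<phi>"
  unfolding expected_def by (subst play_measure_local[OF assms]) auto

lemma expected_bound:
  assumes mphi: "\<phi> \<in> borel_measurable SS" and bphi: "\<And>\<omega>. \<bar>\<phi> \<omega>\<bar> \<le> B"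
  shows "\<bar>expected E V1 V2 \<delta> \<sigma>1 \<sigma>2 u \<phi>\<bar> \<le> B"
proof -
  let ?M = "play_measure E V1 V2 \<delta> \<sigma>1 \<sigma>2 u"
  have ok: "sets ?M = sets SS" "prob_space ?M" using play_measure_ok[of \<sigma>1 \<sigma>2 u] unfolding spec_ok_def by auto
  interpret prob_space ?M by fact
  have m: "\<phi> \<in> borel_measurable ?M" using mphi ok(1) by (simp cong: measurable_cong_sets)
  have int: "integrable ?M \<phi>"
    by (rule integrable_const_bound[where B=B]) (use m bphi in auto)
  have nb: "- B \<le> \<phi> \<omega>" for \<omega> using bphi[of \<omega>] by (auto simp: abs_le_iff)
  have "integral\<^sup>L ?M \<phi> \<le> B" by (rule integral_le_const[OF int]) (use bphi abs_le_D1 in auto)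
  moreover have "- B \<le> integral\<^sup>L ?M \<phi>" by (rule integral_ge_const[OF int]) (use nb in auto)
  ultimately show ?thesis unfolding expected_def by simp
qed

lemma value_eq:
  assumes v: "v \<in> Vp"
    and mphi: "\<phi> \<in> borel_measurable SS" and bphi: "\<And>\<omega>. \<bar>\<phi> \<omega>\<bar> \<le> B"
    and pi: "\<And>\<omega>. is_play E \<omega> \<Longrightarrow> (v, shd \<omega>) \<in> E \<Longrightarrow> \<phi> (v ## \<omega>) = \<phi> \<omega>"
  shows "game_value E V1 V2 \<delta> \<phi> v = (\<Sum>u\<in>succs E v. real_of_rat (\<delta> v u) * game_value E V1 V2 \<delta> \<phi> u)"
proof -
  let ?S1 = "strategies E V1" and ?S2 = "strategies E V2" and ?S = "succs E v"
  let ?F = "\<lambda>u \<tau>1 \<tau>2. expected E V1 V2 \<delta> \<tau>1 \<tau>2 u \<phi>"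
  let ?d = "\<lambda>u. real_of_rat (\<delta> v u)"
  let ?G = "\<lambda>u \<tau>1. INF \<tau>2\<in>?S2. ?F u \<tau>1 \<tau>2"
  have S: "finite ?S" by simp
  have d: "?d u \<ge> 0" if "u \<in> ?S" for u
    using game v that unfolding stochastic_game_def by (auto simp: less_imp_le)
  have Fb: "\<bar>?F u \<tau>1 \<tau>2\<bar> \<le> B" for u \<tau>1 \<tau>2 by (rule expected_bound[OF mphi bphi])
  have Gb: "\<bar>?G u \<tau>1\<bar> \<le> B" for u \<tau>1
  proof -
    have Fb': "- B \<le> ?F u \<tau>1 \<tau>2" for \<tau>2 using Fb[of \<tau>1 \<tau>2 u] by linarith
    have bdd: "bdd_below ((\<lambda>\<tau>2. ?F u \<tau>1 \<tau>2) ` ?S2)" using Fb' by (intro bdd_belowI[of _ "-B"]) auto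
    obtain t where t: "t \<in> ?S2" using strategies_ne by blast
    have "?G u \<tau>1 \<le> B" using cINF_lower[OF bdd t] Fb[of \<tau>1 t u] by (simp add: abs_le_iff)
    moreover have "- B \<le> ?G u \<tau>1" using Fb' by (intro cINF_greatest[OF strategies_ne]) auto
    ultimately show ?thesis by simp
  qed
  have "game_value E V1 V2 \<delta> \<phi> v = (SUP \<sigma>1\<in>?S1. INF \<sigma>2\<in>?S2. \<Sum>u\<in>?S. ?d u * ?F u (sh v \<sigma>1) (sh v \<sigma>2))"
    unfolding game_value_def
    by (intro SUP_cong INF_cong refl expected_decomp[OF v _ _ mphi bphi pi]) auto
  also have "\<dots> = (SUP \<sigma>1\<in>?S1. \<Sum>u\<in>?S. ?d u * ?G u (sh v \<sigma>1))"
  proof (intro SUP_cong refl)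
    fix \<sigma>1 assume s1: "\<sigma>1 \<in> ?S1"
    show "(INF \<sigma>2\<in>?S2. \<Sum>u\<in>?S. ?d u * ?F u (sh v \<sigma>1) (sh v \<sigma>2)) = (\<Sum>u\<in>?S. ?d u * ?G u (sh v \<sigma>1))"
    proof (rule inf_split[OF S d strategies_ne, where B=B])
      show "\<And>u \<tau>. \<bar>?F u (sh v \<sigma>1) \<tau>\<bar> \<le> B" by (rule Fb)
      show "\<exists>\<tau>\<in>?S2. ?F u (sh v \<sigma>1) (sh v \<sigma>) = ?F u (sh v \<sigma>1) \<tau>" if "\<sigma> \<in> ?S2" for \<sigma> u
        using sh_strat[OF that] by blast
      show "\<exists>\<sigma>\<in>?S2. \<forall>u\<in>?S. ?F u (sh v \<sigma>1) (sh v \<sigma>) = ?F u (sh v \<sigma>1) (\<tau>s u)"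
        if "\<And>u. u \<in> ?S \<Longrightarrow> \<tau>s u \<in> ?S2" for \<tau>s
      proof -
        obtain \<sigma>0 where s0: "\<sigma>0 \<in> ?S2" using strategies_ne by blast
        show ?thesis
          by (rule bexI[of _ "glue v ?S \<tau>s \<sigma>0"])
             (auto intro!: expected_local glue_strat[OF s0] that simp: sh_glue)
      qed
    qed auto
  qed
  also have "\<dots> = (\<Sum>u\<in>?S. ?d u * (SUP \<tau>\<in>?S1. ?G u \<tau>))"
  proof (rule sup_split[OF S d strategies_ne, where B=B])
    show "\<And>u \<tau>. \<bar>?G u \<tau>\<bar> \<le> B" by (rule Gb)
    show "\<exists>\<tau>\<in>?S1. ?G u (sh v \<sigma>) = ?G u \<tau>" if "\<sigma> \<in> ?S1" for \<sigma> u
      using sh_strat[OF that] by blast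
    show "\<exists>\<sigma>\<in>?S1. \<forall>u\<in>?S. ?G u (sh v \<sigma>) = ?G u (\<tau>s u)"
      if "\<And>u. u \<in> ?S \<Longrightarrow> \<tau>s u \<in> ?S1" for \<tau>s
    proof -
      obtain \<sigma>0 where s0: "\<sigma>0 \<in> ?S1" using strategies_ne by blast
      show ?thesis
        by (rule bexI[of _ "glue v ?S \<tau>s \<sigma>0"])
           (auto intro!: INF_cong expected_local glue_strat[OF s0] that simp: sh_glue)
    qed
  qed auto
  also have "\<dots> = (\<Sum>u\<in>?S. ?d u * game_value E V1 V2 \<delta> \<phi> u)"
    unfolding game_value_def ..
  finally show ?thesis .
qed

end



lemma sdelta: "(\<Sum>j\<in>(UNIV::'a::finite set). (if j = x then 1 else 0) * (f j::real)) = f x"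
proof -
  have "(\<Sum>j\<in>(UNIV::'a set). (if j = x then 1 else 0) * (f j::real)) = (\<Sum>j\<in>UNIV. if j = x then f j else 0)"
    by (rule sum.cong) auto
  also have "\<dots> = f x" by (subst sum.delta) auto
  finally show ?thesis .
qed
lemma sumS: "(\<Sum>j\<in>(UNIV::'a::finite set). (if j \<in> T then c j else 0) * (f j::real)) = (\<Sum>j\<in>T. c j * f j)"
proof -
  have "(\<Sum>j\<in>(UNIV::'a set). (if j \<in> T then c j else 0) * (f j::real)) = (\<Sum>j\<in>UNIV. if j \<in> T then c j * f j else 0)"
    by (rule sum.cong) auto
  also have "\<dots> = (\<Sum>j\<in>UNIV \<inter> T. c j * f j)" by (subst sum.inter_restrict) auto
  finally show ?thesis by simp
qed

context
  fixes r :: "'v::finite \<Rightarrow> real" and Vp :: "'v set" and S :: "'v \<Rightarrow> 'v set" and d :: "'v \<Rightarrow> 'v \<Rightarrow> rat"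
  assumes dpos: "\<And>v u. v \<in> Vp \<Longrightarrow> u \<in> S v \<Longrightarrow> d v u > 0"
    and dsum: "\<And>v. v \<in> Vp \<Longrightarrow> (\<Sum>u\<in>S v. d v u) = 1"
    and req: "\<And>v. v \<in> Vp \<Longrightarrow> r v = (\<Sum>u\<in>S v. real_of_rat (d v u) * r u)"
begin

definition NB :: "'v \<Rightarrow> bool" where
  "NB x \<longleftrightarrow> \<not> (\<exists>b\<in>Vp. r b = r x \<and> (\<exists>u\<in>S b. r u \<noteq> r x))"

definition bx :: "'v \<Rightarrow> 'v" where
  "bx x = (SOME b. b \<in> Vp \<and> r b = r x \<and> (\<exists>u\<in>S b. r u \<noteq> r x))"

lemma bx:
  assumes "\<not> NB x"
  shows "bx x \<in> Vp" "r (bx x) = r x" "\<exists>u\<in>S (bx x). r u \<noteq> r x"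
  using someI_ex[of "\<lambda>b. b \<in> Vp \<and> r b = r x \<and> (\<exists>u\<in>S b. r u \<noteq> r x)"] assms
  unfolding NB_def bx_def by blast+

lemma NB_cong: "r x = r x' \<Longrightarrow> NB x = NB x'"
  unfolding NB_def by simp

lemma bx_cong: "r x = r x' \<Longrightarrow> bx x = bx x'"
  unfolding bx_def by simp

lemma bx_bx: "\<not> NB x \<Longrightarrow> bx (bx x) = bx x"
  using bx(2) bx_cong by metis

lemma NB_bx: "\<not> NB x \<Longrightarrow> \<not> NB (bx x)"
  using bx(2) NB_cong by metis

definition den :: "'v \<Rightarrow> 'v \<Rightarrow> int" where
  "den v u = snd (quotient_of (d v u))"

definition L :: "'v \<Rightarrow> int" where
  "L v = (\<Prod>u\<in>S v. den v u)"

lemma den_pos: "den v u > 0"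
  unfolding den_def using quotient_of_denom_pos' by blast

lemma L_pos: "L v > 0"
  unfolding L_def using den_pos by (simp add: prod_pos)

lemma dL_Ints: "u \<in> S v \<Longrightarrow> real_of_rat (d v u) * of_int (L v) \<in> \<int>"
proof -
  assume u: "u \<in> S v"
  obtain a where q: "quotient_of (d v u) = (a, den v u)" unfolding den_def by (metis prod.collapse)
  have dv: "d v u = of_int a / of_int (den v u)" by (rule quotient_of_div[OF q])
  have "L v = den v u * (\<Prod>wt\<in>S v - {u}. den v wt)"
    unfolding L_def using u by (simp add: prod.remove)
  then have "real_of_rat (d v u) * of_int (L v) = of_int (a * (\<Prod>wt\<in>S v - {u}. den v wt))"
    using den_pos[of v u] by (simp add: dv of_rat_divide field_simps)
  then show ?thesis by (metis Ints_of_int)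
qed

lemma ite_mult: "(if P then a else b) * (c::real) = (if P then a * c else b * c)"
  by simp

definition Amat :: "real ^'v^'v" where
  "Amat = (\<chi> x y. if NB x then (if y = x then 1 else 0)
          else if x = bx x then of_int (L x) * ((if y = x then 1 else 0) - (if y \<in> S x then real_of_rat (d x y) else 0))
          else (if y = x then 1 else 0) - (if y = bx x then 1 else 0))"

definition rhs :: "real^'v" where
  "rhs = (\<chi> x. if NB x then r x else 0)"


lemma A_row:
  "(Amat *v y) $ x = (if NB x then y $ x
      else if x = bx x then of_int (L x) * (y $ x - (\<Sum>j\<in>S x. real_of_rat (d x j) * y $ j))
      else y $ x - y $ (bx x))"
proof -
  note sx = sdelta[where f="\<lambda>j. y $ j"]
  show ?thesis
  proof (cases "NB x")
    case True then show ?thesis by (simp add: Amat_def matrix_vector_mult_def sx)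
  next
    case nb: False
    show ?thesis
    proof (cases "x = bx x")
      case True
      have xVp: "x \<in> Vp" using bx(1)[OF nb] True by simp
      have "(Amat *v y) $ x = (\<Sum>j\<in>UNIV. of_int (L x) * ((if j = x then 1 else 0) * y $ j - (if j \<in> S x then real_of_rat (d x j) else 0) * y $ j))"
        using nb True by (simp add: Amat_def matrix_vector_mult_def algebra_simps)
      also have "\<dots> = of_int (L x) * (y $ x - (\<Sum>j\<in>S x. real_of_rat (d x j) * y $ j))"
        by (simp add: sum_distrib_left[symmetric] sum_subtractf sx sumS)
      finally show ?thesis using nb True by simp
    next
      case False
      have "(Amat *v y) $ x = (\<Sum>j\<in>UNIV. (if j = x then 1 else 0) * y $ j - (if j = bx x then 1 else 0) * y $ j)"
        using nb False by (simp add: Amat_def matrix_vector_mult_def algebra_simps)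
      also have "\<dots> = y $ x - y $ (bx x)"
        by (simp add: sum_subtractf sx)
      finally show ?thesis using nb False by simp
    qed
  qed
qed

lemma A_r: "Amat *v (\<chi> x. r x) = rhs"
proof -
  have "(Amat *v (\<chi> x. r x)) $ x = rhs $ x" for x
  proof (cases "NB x")
    case False
    then show ?thesis using bx[OF False] req[of x]
      by (auto simp: A_row rhs_def)
  qed (simp add: A_row rhs_def)
  then show ?thesis by (simp add: vec_eq_iff)
qed

lemma ker_nonpos:
  assumes y0: "Amat *v y = 0"
  shows "y $ x \<le> 0"
proof (rule ccontr)
  assume "\<not> y $ x \<le> 0"
  then have yx: "y $ x > 0" by simp
  have rowNB: "NB z \<Longrightarrow> y $ z = 0" for z
  proof -
    assume "NB z"
    moreover have "(Amat *v y) $ z = 0" using y0 by simp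
    ultimately show ?thesis by (simp add: A_row)
  qed
  have rowB: "\<not> NB z \<Longrightarrow> y $ z = y $ (bx z)" for z
  proof -
    assume nz: "\<not> NB z"
    have row: "(Amat *v y) $ z = 0" using y0 by simp
    show ?thesis
    proof (cases "z = bx z")
      case False then show ?thesis using row nz by (simp add: A_row)
    qed simp
  qed
  have rowBB: "\<not> NB z \<Longrightarrow> z = bx z \<Longrightarrow> y $ z = (\<Sum>j\<in>S z. real_of_rat (d z j) * y $ j)" for z
  proof -
    assume nz: "\<not> NB z" and zb: "z = bx z"
    have row: "(Amat *v y) $ z = 0" using y0 by simp
    then show ?thesis using nz zb L_pos[of z] by (simp add: A_row)
  qed
  define m where "m = Max (range (\<lambda>z. y $ z))"
  have ym: "y $ z \<le> m" for z unfolding m_def by (rule Max_ge) auto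
  have mpos: "m > 0" using ym[of x] yx by simp
  define T where "T = {z. y $ z = m}"
  have "m \<in> range (\<lambda>z. y $ z)" unfolding m_def by (rule Max_in) auto
  then have Tne: "T \<noteq> {}" unfolding T_def by auto
  obtain x0 where x0T: "x0 \<in> T" and x0max: "\<And>z. z \<in> T \<Longrightarrow> r z \<le> r x0"
  proof -
    have "Max (r ` T) \<in> r ` T" using Tne by (intro Max_in) auto
    then obtain x0 where "x0 \<in> T" "r x0 = Max (r ` T)" by auto
    moreover have "\<And>z. z \<in> T \<Longrightarrow> r z \<le> Max (r ` T)" by (intro Max_ge) auto
    ultimately show ?thesis using that by metis
  qed
  have nb0: "\<not> NB x0" using x0T rowNB mpos unfolding T_def by force
  define b where "b = bx x0"
  have bVp: "b \<in> Vp" and rb: "r b = r x0" and bex: "\<exists>u\<in>S b. r u \<noteq> r x0"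
    using bx[OF nb0] unfolding b_def by auto
  have nbb: "\<not> NB b" and bbb: "b = bx b" using NB_bx[OF nb0] bx_bx[OF nb0] unfolding b_def by auto
  have ybm: "y $ b = m" using rowB[OF nb0] x0T unfolding T_def b_def by simp
  have ysum: "m = (\<Sum>j\<in>S b. real_of_rat (d b j) * y $ j)" using rowBB[OF nbb bbb] ybm by simp
  have dsumr: "(\<Sum>j\<in>S b. real_of_rat (d b j)) = 1"
    using dsum[OF bVp] by (metis of_rat_1 of_rat_sum)
  have dp: "j \<in> S b \<Longrightarrow> real_of_rat (d b j) > 0" for j using dpos[OF bVp] by simp
  have "(\<Sum>j\<in>S b. real_of_rat (d b j) * (m - y $ j)) = m * (\<Sum>j\<in>S b. real_of_rat (d b j)) - (\<Sum>j\<in>S b. real_of_rat (d b j) * y $ j)"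
    by (simp add: algebra_simps sum_subtractf sum_distrib_left)
  also have "\<dots> = 0" using dsumr ysum by simp
  finally have "(\<Sum>j\<in>S b. real_of_rat (d b j) * (m - y $ j)) = 0" .
  moreover have "\<And>j. j \<in> S b \<Longrightarrow> 0 \<le> real_of_rat (d b j) * (m - y $ j)"
    using dp ym by (simp add: less_imp_le)
  ultimately have "\<forall>j\<in>S b. real_of_rat (d b j) * (m - y $ j) = 0"
    using sum_nonneg_eq_0_iff[of "S b" "\<lambda>j. real_of_rat (d b j) * (m - y $ j)"] by simp
  then have jT: "j \<in> S b \<Longrightarrow> j \<in> T" for j using dp[of j] unfolding T_def by auto
  have rle: "j \<in> S b \<Longrightarrow> r j \<le> r b" for j using x0max[OF jT] rb by simp
  have "(\<Sum>j\<in>S b. real_of_rat (d b j) * (r b - r j)) = r b * (\<Sum>j\<in>S b. real_of_rat (d b j)) - (\<Sum>j\<in>S b. real_of_rat (d b j) * r j)"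
    by (simp add: algebra_simps sum_subtractf sum_distrib_left)
  also have "\<dots> = 0" using dsumr req[OF bVp] by simp
  finally have "(\<Sum>j\<in>S b. real_of_rat (d b j) * (r b - r j)) = 0" .
  moreover have "\<And>j. j \<in> S b \<Longrightarrow> 0 \<le> real_of_rat (d b j) * (r b - r j)"
    using dp rle by (simp add: less_imp_le)
  ultimately have "\<forall>j\<in>S b. real_of_rat (d b j) * (r b - r j) = 0"
    using sum_nonneg_eq_0_iff[of "S b" "\<lambda>j. real_of_rat (d b j) * (r b - r j)"] by simp
  then have "\<forall>j\<in>S b. r j = r b"
  proof (intro ballI)
    fix j assume j: "j \<in> S b" and "\<forall>j\<in>S b. real_of_rat (d b j) * (r b - r j) = 0"
    then have "real_of_rat (d b j) * (r b - r j) = 0" by blast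
    then show "r j = r b" using dp[OF j] by simp
  qed
  then show False using bex rb by auto
qed

lemma A_inj: "Amat *v y = 0 \<Longrightarrow> y = 0"
proof -
  assume y0: "Amat *v y = 0"
  have "Amat *v (0 - y) = Amat *v 0 - Amat *v y" by (rule matrix_vector_mult_diff_distrib)
  then have "Amat *v (0 - y) = 0" using y0 by simp
  then have "(0 - y) $ x \<le> 0" for x by (rule ker_nonpos)
  moreover have "y $ x \<le> 0" for x using y0 by (rule ker_nonpos)
  ultimately show "y = 0" by (auto simp: vec_eq_iff intro: antisym)
qed

lemma det_A_nz: "det Amat \<noteq> 0"
  using A_inj unfolding invertible_det_nz[symmetric] invertible_left_inverse matrix_left_invertible_ker
  by blast

lemma det_Ints: "(\<And>i j. M $ i $ j \<in> \<int>) \<Longrightarrow> det (M :: real^'n^'n) \<in> \<int>"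
  unfolding det_def by (intro Ints_sum Ints_mult Ints_prod Ints_of_int) auto

lemma A_Ints: "Amat $ i $ j \<in> \<int>"
proof -
  have "of_int (L i) * ((if j = i then 1 else 0) - (if j \<in> S i then real_of_rat (d i j) else 0))
        = (if j = i then of_int (L i) else 0) - (if j \<in> S i then real_of_rat (d i j) * of_int (L i) else 0)"
    by (simp add: algebra_simps)
  moreover have "(if j \<in> S i then real_of_rat (d i j) * of_int (L i) else 0) \<in> \<int>"
    using dL_Ints[of j i] by auto
  ultimately show ?thesis unfolding Amat_def by (auto intro!: Ints_diff)
qed

lemma abs_det_le: "\<bar>det (M :: real^'n^'n)\<bar> \<le> (\<Prod>i\<in>UNIV. \<Sum>j\<in>UNIV. \<bar>M $ i $ j\<bar>)"
proof -
  have "\<bar>det M\<bar> \<le> (\<Sum>p\<in>{p. p permutes (UNIV :: 'n set)}. \<bar>of_int (sign p) * (\<Prod>i\<in>UNIV. M $ i $ p i)\<bar>)"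
    unfolding det_def by (rule sum_abs)
  also have "\<dots> = (\<Sum>p\<in>{p. p permutes (UNIV :: 'n set)}. (\<Prod>i\<in>UNIV. \<bar>M $ i $ p i\<bar>))"
  proof (intro sum.cong refl)
    fix p :: "'n \<Rightarrow> 'n"
    have "\<bar>of_int (sign p) :: real\<bar> = 1" by (simp add: sign_def)
    then show "\<bar>of_int (sign p) * (\<Prod>i\<in>UNIV. M $ i $ p i)\<bar> = (\<Prod>i\<in>UNIV. \<bar>M $ i $ p i\<bar>)"
      by (simp only: abs_mult abs_prod mult_1_left)
  qed
  also have "\<dots> \<le> (\<Sum>p\<in>PiE UNIV (\<lambda>_. UNIV). (\<Prod>i\<in>UNIV. \<bar>M $ i $ p i\<bar>))"
    by (intro sum_mono2) (auto intro: finite_PiE prod_nonneg)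
  also have "\<dots> = (\<Prod>i\<in>UNIV. \<Sum>j\<in>UNIV. \<bar>M $ i $ j\<bar>)"
    by (rule prod_sum_PiE[symmetric]) auto
  finally show ?thesis .
qed

definition wt :: "'v \<Rightarrow> real" where
  "wt i = (if \<not> NB i \<and> i = bx i then of_int (L i) else 1)"

lemma A_NB: "NB i \<Longrightarrow> Amat $ i $ j = (if j = i then 1 else 0)"
  unfolding Amat_def by simp

lemma A_2: "\<not> NB i \<Longrightarrow> bx i = i \<Longrightarrow>
   Amat $ i $ j = of_int (L i) * ((if j = i then 1 else 0) - (if j \<in> S i then real_of_rat (d i j) else 0))"
  unfolding Amat_def by simp

lemma A_3: "\<not> NB i \<Longrightarrow> bx i \<noteq> i \<Longrightarrow> Amat $ i $ j = (if j = i then 1 else 0) - (if j = bx i then 1 else 0)"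
  unfolding Amat_def by simp

lemma row_le: "(\<Sum>j\<in>UNIV. \<bar>Amat $ i $ j\<bar>) \<le> 2 * wt i"
proof (cases "NB i")
  case True
  have "(\<Sum>j\<in>UNIV. \<bar>Amat $ i $ j\<bar>) = (\<Sum>j\<in>UNIV. (if j = i then 1 else 0) * 1)"
    using True by (intro sum.cong) (auto simp: A_NB)
  also have "\<dots> = 1" by (rule sdelta)
  finally show ?thesis using True by (simp add: wt_def)
next
  case nb: False
  show ?thesis
  proof (cases "bx i = i")
    case True
    have iVp: "i \<in> Vp" using bx(1)[OF nb] True by simp
    have Lp: "of_int (L i) > (0::real)" using L_pos by simp
    have "(\<Sum>j\<in>UNIV. \<bar>Amat $ i $ j\<bar>) \<le> (\<Sum>j\<in>UNIV. of_int (L i) * ((if j = i then 1 else 0) * 1 + (if j \<in> S i then real_of_rat (d i j) else 0) * 1))"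
    proof (intro sum_mono)
      fix j
      have "\<bar>(if j = i then 1 else 0) - (if j \<in> S i then real_of_rat (d i j) else 0)\<bar>
          \<le> (if j = i then 1 else 0) + (if j \<in> S i then real_of_rat (d i j) else 0)"
        using dpos[OF iVp, of j] by (auto simp: abs_le_iff)
      then show "\<bar>Amat $ i $ j\<bar> \<le> of_int (L i) * ((if j = i then 1 else 0) * 1 + (if j \<in> S i then real_of_rat (d i j) else 0) * 1)"
        using Lp unfolding A_2[OF nb True] abs_mult by (simp add: mult_left_mono)
    qed
    also have "\<dots> = of_int (L i) * (1 + (\<Sum>j\<in>S i. real_of_rat (d i j) * 1))"
    proof -
      have "(\<Sum>j\<in>UNIV. of_int (L i) * ((if j = i then 1 else 0) * 1 + (if j \<in> S i then real_of_rat (d i j) else 0) * 1))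
          = of_int (L i) * (\<Sum>j\<in>UNIV. (if j = i then 1 else 0) * 1 + (if j \<in> S i then real_of_rat (d i j) else 0) * (1::real))"
        by (rule sum_distrib_left[symmetric])
      also have "(\<Sum>j\<in>UNIV. (if j = i then 1 else 0) * 1 + (if j \<in> S i then real_of_rat (d i j) else 0) * (1::real))
          = (\<Sum>j\<in>UNIV. (if j = i then 1 else 0) * (1::real)) + (\<Sum>j\<in>UNIV. (if j \<in> S i then real_of_rat (d i j) else 0) * (1::real))"
        by (rule sum.distrib)
      also have "\<dots> = 1 + (\<Sum>j\<in>S i. real_of_rat (d i j) * 1)"
        by (simp only: sdelta sumS)
      finally show ?thesis .
    qed
    also have "(\<Sum>j\<in>S i. real_of_rat (d i j) * 1) = 1"
    proof -
      have "(\<Sum>j\<in>S i. real_of_rat (d i j)) = real_of_rat (\<Sum>j\<in>S i. d i j)" by (rule of_rat_sum[symmetric])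
      then show ?thesis using dsum[OF iVp] by simp
    qed
    finally show ?thesis using nb True by (simp add: wt_def)
  next
    case False
    have "(\<Sum>j\<in>UNIV. \<bar>Amat $ i $ j\<bar>) \<le> (\<Sum>j\<in>UNIV. (if j = i then 1 else 0) * 1 + (if j = bx i then 1 else 0) * 1)"
      unfolding A_3[OF nb False] by (intro sum_mono) auto
    also have "\<dots> = 2" by (simp only: sum.distrib sdelta)
    finally show ?thesis using nb False by (simp add: wt_def)
  qed
qed

lemma w_le:
  fixes N :: int
  assumes N1: "N \<ge> 1" and denN: "\<And>v u. v \<in> Vp \<Longrightarrow> u \<in> S v \<Longrightarrow> den v u \<le> N"
  shows "wt i \<le> of_int N ^ CARD('v) \<and> 0 \<le> wt i"
proof (cases "\<not> NB i \<and> bx i = i")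
  case True
  have iVp: "i \<in> Vp" using bx(1)[of i] True by simp
  have "L i \<le> N ^ CARD('v)"
    unfolding L_def
    by (rule prod_le_power) (use den_pos denN[OF iVp] N1 card_mono[of UNIV "S i"] in \<open>auto intro: less_imp_le\<close>)
  then have "of_int (L i) \<le> (of_int (N ^ CARD('v)) :: real)" by linarith
  then show ?thesis using True L_pos[of i] by (auto simp: wt_def)
next
  case False
  have "(1::real) \<le> of_int N ^ CARD('v)" using N1 by simp
  then show ?thesis using False by (auto simp: wt_def)
qed

lemma abs_det_A_le:
  fixes N :: int
  assumes N1: "N \<ge> 1" and denN: "\<And>v u. v \<in> Vp \<Longrightarrow> u \<in> S v \<Longrightarrow> den v u \<le> N"
  shows "\<bar>det Amat\<bar> \<le> 2 ^ CARD('v) * of_int N ^ (CARD('v) * CARD('v))"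
proof -
  have "\<bar>det Amat\<bar> \<le> (\<Prod>i\<in>UNIV. \<Sum>j\<in>UNIV. \<bar>Amat $ i $ j\<bar>)" by (rule abs_det_le)
  also have "\<dots> \<le> (\<Prod>i\<in>(UNIV::'v set). 2 * of_int N ^ CARD('v))"
    by (intro prod_mono conjI sum_nonneg abs_ge_zero order.trans[OF row_le])
       (use w_le[OF N1 denN] in auto)
  also have "\<dots> = 2 ^ CARD('v) * of_int N ^ (CARD('v) * CARD('v))"
    by (simp add: power_mult_distrib power_mult mult.commute)
  finally show ?thesis .
qed

lemma partB:
  fixes N B0 :: int
  assumes N1: "N \<ge> 1" and denN: "\<And>v u. v \<in> Vp \<Longrightarrow> u \<in> S v \<Longrightarrow> den v u \<le> N"
    and B0: "B0 > 0"
    and hyp: "\<And>x. NB x \<Longrightarrow> \<exists>p q::int. 0 < q \<and> q \<le> B0 \<and> r x = of_int p / of_int q"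
  shows "\<exists>p q::int. 0 < q \<and> q \<le> 2 ^ CARD('v) * N ^ (CARD('v) ^ 3) * B0 ^ CARD('v) \<and> r k = of_int p / of_int q"
proof -
  let ?n = "CARD('v)"
  obtain P Qf :: "'v \<Rightarrow> int" where PQ: "\<And>x. NB x \<Longrightarrow> 0 < Qf x \<and> Qf x \<le> B0 \<and> r x = of_int (P x) / of_int (Qf x)"
  proof -
    have "\<forall>x. \<exists>pq::int\<times>int. NB x \<longrightarrow> 0 < snd pq \<and> snd pq \<le> B0 \<and> r x = of_int (fst pq) / of_int (snd pq)"
      using hyp by fastforce
    then obtain f where f: "\<forall>x. NB x \<longrightarrow> 0 < snd (f x) \<and> snd (f x) \<le> B0 \<and> r x = of_int (fst (f x)) / of_int (snd (f x))"
      by metis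
    show ?thesis by (rule that[where P="\<lambda>x. fst (f x)" and Qf="\<lambda>x. snd (f x)"]) (use f in auto)
  qed
  define NBs where "NBs = {x. NB x}"
  define Qi where "Qi = (\<Prod>x\<in>NBs. Qf x)"
  have Qi_pos: "Qi > 0" unfolding Qi_def NBs_def using PQ by (auto intro: prod_pos)
  have Qi_le: "Qi \<le> B0 ^ ?n" unfolding Qi_def
    by (rule prod_le_power) (use PQ B0 card_mono[of UNIV NBs] in \<open>auto simp: NBs_def intro: less_imp_le\<close>)
  define Q where "Q = (of_int Qi :: real)"
  have Qr: "Q * r x \<in> \<int>" if "NB x" for x
  proof -
    have "Qi = Qf x * (\<Prod>y\<in>NBs - {x}. Qf y)" unfolding Qi_def using that by (simp add: NBs_def prod.remove)
    then have "Q * r x = of_int (P x * (\<Prod>y\<in>NBs - {x}. Qf y))"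
      using PQ[OF that] by (simp add: Q_def field_simps)
    then show ?thesis by (metis Ints_of_int)
  qed
  define xv where "xv = Q *\<^sub>R (\<chi> z. r z)"
  have Axv: "Amat *v xv = Q *\<^sub>R rhs" unfolding xv_def by (simp add: matrix_vector_mult_scaleR A_r)
  define Mk where "Mk = (\<chi> i j. if j = k then (Amat *v xv) $ i else Amat $ i $ j)"
  have detMk: "det Mk = xv $ k * det Amat" unfolding Mk_def by (rule cramer_lemma)
  have Mk_Ints: "Mk $ i $ j \<in> \<int>" for i j
    unfolding Mk_def Axv using A_Ints Qr by (auto simp: rhs_def)
  obtain c where c: "det Mk = of_int c" using det_Ints[OF Mk_Ints] by (auto elim: Ints_cases)
  obtain a where a: "det Amat = of_int a" using det_Ints[of Amat] A_Ints by (auto elim: Ints_cases)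
  have a0: "a \<noteq> 0" using det_A_nz a by auto
  have rk: "r k = of_int c / of_int (Qi * a)"
    using detMk c a a0 Qi_pos by (simp add: xv_def Q_def field_simps)
  have "\<bar>of_int a\<bar> \<le> (2 ^ ?n * of_int N ^ (?n * ?n) :: real)"
    using abs_det_A_le[OF N1 denN] a by simp
  moreover have "(2 ^ ?n * of_int N ^ (?n * ?n) :: real) = of_int (2 ^ ?n * N ^ (?n * ?n))" by simp
  moreover have "\<bar>of_int a\<bar> = (of_int \<bar>a\<bar> :: real)" by simp
  ultimately have "(of_int \<bar>a\<bar> :: real) \<le> of_int (2 ^ ?n * N ^ (?n * ?n))" by linarith
  then have a_le: "\<bar>a\<bar> \<le> 2 ^ ?n * N ^ (?n * ?n)" by (simp only: of_int_le_iff)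
  have "N ^ (?n * ?n) \<le> N ^ (?n ^ 3)"
    using N1 by (intro power_increasing) (auto simp: power3_eq_cube)
  then have a_le': "\<bar>a\<bar> \<le> 2 ^ ?n * N ^ (?n ^ 3)" using a_le
    by (meson order.trans mult_left_mono zero_le_numeral zero_le_power)
  define q where "q = Qi * \<bar>a\<bar>"
  define p where "p = (if a > 0 then c else - c)"
  have q_pos: "q > 0" unfolding q_def using Qi_pos a0 by simp
  have "q \<le> B0 ^ ?n * (2 ^ ?n * N ^ (?n ^ 3))"
    unfolding q_def using Qi_pos Qi_le a_le' by (intro mult_mono) auto
  then have q_le: "q \<le> 2 ^ ?n * N ^ (?n ^ 3) * B0 ^ ?n" by (simp add: mult_ac)
  have "r k = of_int p / of_int q"
  proof (cases "a > 0")
    case True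
    then show ?thesis unfolding rk p_def q_def by simp
  next
    case False
    then have "a < 0" using a0 by simp
    then have aa: "\<bar>a\<bar> = - a" by auto
    have "(of_int (- c) :: real) / of_int (Qi * - a) = of_int c / of_int (Qi * a)"
      by (simp only: of_int_minus mult_minus_right minus_divide_divide)
    then show ?thesis unfolding rk p_def q_def aa using False by simp
  qed
  then show ?thesis using q_pos q_le by blast
qed

end

theorem theorem11:
  fixes E :: "('v::finite \<times> 'v) set" and V1 V2 Vp :: "'v set"
    and \<delta> :: "'v \<Rightarrow> 'v \<Rightarrow> rat" and w :: "'v \<times> 'v \<Rightarrow> rat"
    and \<phi> :: "'v stream \<Rightarrow> real" and B0 :: int
  assumes game: "stochastic_game E V1 V2 Vp \<delta>"
    and meas: "\<phi> \<in> borel_measurable (stream_space (count_space UNIV))"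
    and bdd: "bounded_objective E \<phi>"
    and pind: "prefix_independent E \<phi>"
    and B0_pos: "B0 > 0"
    and B0: "\<forall>C \<in> classes (game_value E V1 V2 \<delta> \<phi>).
               (\<forall>v. \<not> boundary_vertex E Vp C v) \<longrightarrow>
               (\<exists>p q :: int. 0 < q \<and> q \<le> B0 \<and>
                  class_value (game_value E V1 V2 \<delta> \<phi>) C = of_int p / of_int q)"
  shows "\<forall>C \<in> classes (game_value E V1 V2 \<delta> \<phi>).
           \<exists>p q :: int. 0 < q \<and>
             q \<le> 2 ^ CARD('v) * max_denom E Vp \<delta> ^ (CARD('v) ^ 3) * B0 ^ CARD('v) \<and>
             class_value (game_value E V1 V2 \<delta> \<phi>) C = of_int p / of_int q"
proof -
  let ?r = "game_value E V1 V2 \<delta> \<phi>"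
  obtain W :: int where W: "\<And>\<omega>. is_play E \<omega> \<Longrightarrow> \<bar>\<phi> \<omega>\<bar> \<le> W"
    using bdd unfolding bounded_objective_def by blast
  define Bd where "Bd = (of_int \<bar>W\<bar> :: real)"
  define \<phi>c where "\<phi>c = (\<lambda>\<omega>. max (- Bd) (min Bd (\<phi> \<omega>)))"
  have mc: "\<phi>c \<in> borel_measurable (stream_space (count_space UNIV))"
    unfolding \<phi>c_def using meas by measurable
  have bc: "\<bar>\<phi>c \<omega>\<bar> \<le> Bd" for \<omega> unfolding \<phi>c_def Bd_def by auto
  have eqc: "is_play E \<omega> \<Longrightarrow> \<phi>c \<omega> = \<phi> \<omega>" for \<omega>
    using W[of \<omega>] unfolding \<phi>c_def Bd_def by auto
  have play_cons: "is_play E (v ## \<omega>)" if "is_play E \<omega>" "(v, shd \<omega>) \<in> E" for v \<omega>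
    unfolding is_play_def
  proof
    fix i show "((v ## \<omega>) !! i, (v ## \<omega>) !! Suc i) \<in> E"
      using that unfolding is_play_def by (cases i) auto
  qed
  have pic: "\<phi>c (v ## \<omega>) = \<phi>c \<omega>" if "is_play E \<omega>" "(v, shd \<omega>) \<in> E" for v \<omega>
  proof -
    have "\<phi> (v ## \<omega>) = \<phi> \<omega>"
    proof -
      have "is_play E (v ## \<omega>) \<and> is_play E \<omega> \<and> sdrop 1 (v ## \<omega>) = sdrop 0 \<omega>"
        using play_cons[OF that] that(1) by simp
      then show ?thesis using pind unfolding prefix_independent_def by blast
    qed
    then show ?thesis using eqc play_cons[OF that] that(1) by simp
  qed
  have val_c: "?r = game_value E V1 V2 \<delta> \<phi>c"
  proof
    fix v
    show "?r v = game_value E V1 V2 \<delta> \<phi>c v"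
      unfolding game_value_def
    proof (intro SUP_cong INF_cong refl)
      fix \<sigma>1 \<sigma>2 assume s1: "\<sigma>1 \<in> strategies E V1" and s2: "\<sigma>2 \<in> strategies E V2"
      let ?M = "play_measure E V1 V2 \<delta> \<sigma>1 \<sigma>2 v"
      have sM: "sets ?M = sets (stream_space (count_space UNIV))"
        by (rule play_measure_sets[OF game])
      show "expected E V1 V2 \<delta> \<sigma>1 \<sigma>2 v \<phi> = expected E V1 V2 \<delta> \<sigma>1 \<sigma>2 v \<phi>c"
        unfolding expected_def
      proof (rule integral_cong_AE)
        show "\<phi> \<in> borel_measurable ?M" using meas sM by (simp cong: measurable_cong_sets)
        show "\<phi>c \<in> borel_measurable ?M" using mc sM by (simp cong: measurable_cong_sets)
        show "AE \<omega> in ?M. \<phi> \<omega> = \<phi>c \<omega>"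
          using AE_play[OF game s1 s2, of v] by (rule AE_mp) (auto simp: eqc)
      qed
    qed
  qed
  have gm: "\<forall>x. succs E x \<noteq> {}" "V1 \<union> V2 \<union> Vp = UNIV"
    and gp: "\<And>v u. v \<in> Vp \<Longrightarrow> u \<in> succs E v \<Longrightarrow> \<delta> v u > 0"
    and gs: "\<And>v. v \<in> Vp \<Longrightarrow> (\<Sum>u\<in>succs E v. \<delta> v u) = 1"
    using game unfolding stochastic_game_def by auto
  have req: "?r v = (\<Sum>u\<in>succs E v. real_of_rat (\<delta> v u) * ?r u)" if v: "v \<in> Vp" for v
    unfolding val_c by (rule value_eq[OF game v mc bc pic])
  define N where "N = max_denom E Vp \<delta>"
  have finD: "finite {snd (quotient_of (\<delta> v u)) | v u. v \<in> Vp \<and> u \<in> succs E v}"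
  proof -
    have "{snd (quotient_of (\<delta> v u)) | v u. v \<in> Vp \<and> u \<in> succs E v} \<subseteq> (\<lambda>(v, u). snd (quotient_of (\<delta> v u))) ` UNIV"
      by auto
    then show ?thesis by (rule finite_subset) simp
  qed
  have N1: "N \<ge> 1" unfolding N_def max_denom_def using finD by (intro Max_ge) auto
  have denN: "snd (quotient_of (\<delta> v u)) \<le> N" if "v \<in> Vp" "u \<in> succs E v" for v u
    unfolding N_def max_denom_def using finD that by (intro Max_ge) auto
  show ?thesis
  proof
    fix C assume C: "C \<in> classes ?r"
    then obtain c where Cne: "C \<noteq> {}" and Cc: "C = {u. ?r u = c}" unfolding classes_def by blast
    obtain x where xC: "x \<in> C" using Cne by blast
    have rx: "?r x = c" using xC Cc by blast
    have "(SOME u. u \<in> C) \<in> C" using xC by (rule someI)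
    then have "?r (SOME u. u \<in> C) = c" using Cc by blast
    then have cv: "class_value ?r C = ?r x"
      unfolding class_value_def using rx by simp
    have hyp: "\<exists>p q::int. 0 < q \<and> q \<le> B0 \<and> ?r y = of_int p / of_int q"
      if nb: "NB ?r Vp (succs E) y" for y
    proof -
      let ?C = "{u. ?r u = ?r y}"
      have Ccl: "?C \<in> classes ?r" unfolding classes_def by auto
      have "\<forall>v. \<not> boundary_vertex E Vp ?C v"
      proof -
        have "\<not> (\<exists>b\<in>Vp. ?r b = ?r y \<and> (\<exists>u\<in>succs E b. ?r u \<noteq> ?r y))"
          using NB_def[where r="?r" and Vp=Vp and S="succs E" and d=\<delta> and x=y, OF gp gs req] nb by blast
        note nob = this
        show ?thesis
        proof (intro allI notI)
          fix v assume "boundary_vertex E Vp ?C v"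
          then have v: "v \<in> Vp" "?r v = ?r y" "\<not> succs E v \<subseteq> ?C"
            unfolding boundary_vertex_def by simp_all
          then obtain u where "u \<in> succs E v" "?r u \<noteq> ?r y" by blast
          then show False using nob v by blast
        qed
      qed
      then obtain p q :: int where pq: "0 < q" "q \<le> B0" "class_value ?r ?C = of_int p / of_int q"
        using B0 Ccl by blast
      have "class_value ?r ?C = ?r y"
        unfolding class_value_def using someI[of "\<lambda>u. u \<in> ?C" y] by auto
      then have "?r y = of_int p / of_int q" using pq(3) by simp
      then show ?thesis using pq(1,2) by blast
    qed
    have denN': "den \<delta> v u \<le> N" if "v \<in> Vp" "u \<in> succs E v" for v u
      using denN[OF that] den_def[where d=\<delta> and r="?r" and Vp=Vp and S="succs E", OF gp gs req] by simp
    have pB: "\<exists>p q::int. 0 < q \<and> q \<le> 2 ^ CARD('v) * N ^ (CARD('v) ^ 3) * B0 ^ CARD('v) \<and> ?r x = of_int p / of_int q"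
      by (rule partB[where k=x, OF gp gs req N1 denN' B0_pos hyp])
    then obtain p q :: int where pq: "0 < q" "q \<le> 2 ^ CARD('v) * N ^ (CARD('v) ^ 3) * B0 ^ CARD('v)"
        "?r x = of_int p / of_int q"
      by blast
    have "class_value ?r C = of_int p / of_int q" using cv pq(3) by simp
    with pq(1,2) show "\<exists>p q :: int. 0 < q \<and>
             q \<le> 2 ^ CARD('v) * max_denom E Vp \<delta> ^ (CARD('v) ^ 3) * B0 ^ CARD('v) \<and>
             class_value ?r C = of_int p / of_int q"
      unfolding N_def by blast
  qed
qed

end
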